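(* Assume bifurcation assumption (B) with non-critical maximal cells, so $K=\sum_{\sigma\in\Sigma}a_\sigma\neq0$. Let $p\in C$ be non-maximal and critical, and suppose $x_q(\lambda)=X(\lambda)$ for all $q\vartriangleright p$, with $X(\lambda)=D\lambda+R\lambda^2+O(|\lambda|^3)$ the fully synchronous branch. Then generically the $p$-th bifurcation equation has, for $|\lambda|$ small, two solution branches (a transcritical bifurcation) $$x_p(\lambda)=D_p^\pm\lambda+O(|\lambda|^2),$$ with $$D_p^+=-\frac{\ell}{K},\qquad D_p^-=\frac{\ell}{K}\Bigl(1+2\frac{\sum_{\sigma\in\mathcal L_p,\tau\notin\mathcal L_p}f_{\sigma\tau}}{\sum_{\sigma,\tau\in\mathcal L_p}f_{\sigma\tau}}\Bigr)-\frac{\sum_{\sigma\in\mathcal L_p}f_{\sigma\lambda}}{\sum_{\sigma,\tau\in\mathcal L_p}f_{\sigma\tau}}.$$ The branch with coefficient $D_p^+$ is $x_p=X(\lambda)$.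
   Context: Network: finite set of cells $C$, set $\Sigma=\{\sigma_1,\dots,\sigma_n\}$ of pairwise distinct maps $C\to C$ with $\sigma_1=\mathrm{Id}_C$; arrow of type $\sigma$ from $q$ to $p$ iff $\sigma(p)=q$; paths are sets of pairwise distinct cells $\{p_1,\dots,p_k\}$ with $\tau_j(p_{j+1})=p_j$ for some $\tau_j\in\Sigma$; the network is feedforward (no cycles of length $\ge2$). $p\trianglelefteq q$ iff there is a path from $q$ to $p$ (a partial order), $q\vartriangleright p$ means $p\trianglelefteq q$, $p\ne q$; maximal cells are those with $\sigma(p)=p$ for all $\sigma$. Bifurcation setting: $V=\mathbb R$, $f\colon\mathbb R^n\times\mathbb R\to\mathbb R$ smooth with its first $n$ arguments labelled by $\Sigma$, $\gamma_f(x,\lambda)_p=f(x_{\sigma_1(p)},\dots,x_{\sigma_n(p)},\lambda)$; the $p$-th bifurcation equation $\gamma_f(x,\lambda)_p=0$ involves only $x_q$, $q\trianglerighteq p$, and is solved for $x_p$ near $0$ given $x_q(\lambda)$, $q\vartriangleright p$. Coefficients: $a_\sigma=\partial_\sigma f(0,0)$, $f_{\sigma\tau}=\tfrac12\partial_\sigma\partial_\tau f(0,0)$, $f_{\sigma\lambda}=\partial_\sigma\partial_\lambda f(0,0)$, $\ell=\partial_\lambda f(0,0)$, $f_{\lambda\lambda}=\tfrac12\partial_\lambda^2 f(0,0)$. $\mathcal L_p=\{\sigma:\sigma(p)=p\}$; $p$ is critical if $\sum_{\sigma\in\mathcal L_p}a_\sigma=0$. Bifurcation assumption (B): $f(0,0)=0$,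 some cell is critical, exactly the cells with the same $\mathcal L_p$ as a critical cell are critical. Fully synchronous branch: $D=-\ell/K$, $R=-\bigl(\sum_{\sigma,\tau\in\Sigma}f_{\sigma\tau}\ell^2-K\sum_{\sigma\in\Sigma}f_{\sigma\lambda}\ell+K^2f_{\lambda\lambda}\bigr)/K^3$, where $X$ is the unique solution in the synchronous subspace. "Generically" means for an open dense set of Taylor coefficients of $f$ at $(0,0)$. *)

theory Defs
  imports "HOL-Analysis.Analysis" "HOL-Library.Landau_Symbols"
begin

text \<open>The set Sigma of pairwise distinct maps is given by an
  injective family sig :: 's => 'c => 'c indexed by a finite type 's (n = CARD('s)).
  An arrow of type sig i goes from q to p iff sig i p = q.\<close>

definition is_path :: "('s \<Rightarrow> 'c \<Rightarrow> 'c) \<Rightarrow> 'c list \<Rightarrow> bool" where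
  "is_path sig ps \<longleftrightarrow> ps \<noteq> [] \<and> distinct ps \<and>
     (\<forall>j. Suc j < length ps \<longrightarrow> (\<exists>i. sig i (ps ! Suc j) = ps ! j))"

text \<open>A path [p1,...,pk] runs from p1 to pk. A cycle of length >= 2: a path of length >= 2
  together with an arrow from pk back to p1.\<close>
definition feedforward :: "('s \<Rightarrow> 'c \<Rightarrow> 'c) \<Rightarrow> bool" where
  "feedforward sig \<longleftrightarrow>
     \<not> (\<exists>ps. is_path sig ps \<and> length ps \<ge> 2 \<and> (\<exists>i. sig i (hd ps) = last ps))"

definition below :: "('s \<Rightarrow> 'c \<Rightarrow> 'c) \<Rightarrow> 'c \<Rightarrow> 'c \<Rightarrow> bool" where
  "below sig p q \<longleftrightarrow> (\<exists>ps. is_path sig ps \<and> hd ps = q \<and> last ps = p)"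

definition maximal_cell :: "('s \<Rightarrow> 'c \<Rightarrow> 'c) \<Rightarrow> 'c \<Rightarrow> bool" where
  "maximal_cell sig p \<longleftrightarrow> (\<forall>i. sig i p = p)"

definition Lset :: "('s \<Rightarrow> 'c \<Rightarrow> 'c) \<Rightarrow> 'c \<Rightarrow> 's set" where
  "Lset sig p = {i. sig i p = p}"

text \<open>f :: real^'s => real => real; its first n arguments are labelled by Sigma
  (component i <-> sig i), the last one is lambda. Variables: Some i (the sig i argument),
  None (lambda).\<close>

definition pd :: "'s option \<Rightarrow> (real^'s::finite \<Rightarrow> real \<Rightarrow> real) \<Rightarrow> (real^'s \<Rightarrow> real \<Rightarrow> real)" where
  "pd v g = (case v of
      Some i \<Rightarrow> (\<lambda>x l. deriv (\<lambda>t. g (x + t *\<^sub>R axis i 1) l) 0)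
    | None \<Rightarrow> (\<lambda>x l. deriv (\<lambda>t. g x (l + t)) 0))"

definition has_pd :: "'s option \<Rightarrow> (real^'s::finite \<Rightarrow> real \<Rightarrow> real) \<Rightarrow> real^'s \<Rightarrow> real \<Rightarrow> bool" where
  "has_pd v g x l = (case v of
      Some i \<Rightarrow> (\<lambda>t. g (x + t *\<^sub>R axis i 1) l) differentiable (at 0)
    | None \<Rightarrow> (\<lambda>t. g x (l + t)) differentiable (at 0))"

text \<open>Iterated partial derivative: pds [v1,...,vk] g = d_v1 (... (d_vk g)).\<close>
definition pds :: "'s option list \<Rightarrow> (real^'s::finite \<Rightarrow> real \<Rightarrow> real) \<Rightarrow> (real^'s \<Rightarrow> real \<Rightarrow> real)" where
  "pds vs g = foldr pd vs g"

definition smooth_fun :: "(real^'s::finite \<Rightarrow> real \<Rightarrow> real) \<Rightarrow> bool" where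
  "smooth_fun g \<longleftrightarrow> (\<forall>vs. continuous_on UNIV (\<lambda>(x, l). pds vs g x l) \<and>
                         (\<forall>v x l. has_pd v (pds vs g) x l))"

text \<open>Taylor data of f at (0,0): all iterated partial derivatives at the origin,
  indexed by the list of differentiation variables (a fixed homeomorphic rescaling of the
  Taylor coefficients), with the product topology.\<close>
definition taylor :: "(real^'s::finite \<Rightarrow> real \<Rightarrow> real) \<Rightarrow> ('s option list \<Rightarrow> real)" where
  "taylor g = (\<lambda>vs. pds vs g 0 0)"

definition generically ::
  "((real^'s::finite \<Rightarrow> real \<Rightarrow> real) \<Rightarrow> bool) \<Rightarrow> ((real^'s \<Rightarrow> real \<Rightarrow> real) \<Rightarrow> bool) \<Rightarrow> bool" where
  "generically A P \<longleftrightarrow> (\<exists>G :: ('s option list \<Rightarrow> real) set. open G \<and>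
      (\<forall>f. A f \<longrightarrow> taylor f \<in> closure (G \<inter> taylor ` {g. A g})) \<and>
      (\<forall>f. A f \<longrightarrow> taylor f \<in> G \<longrightarrow> P f))"

definition coef_a :: "(real^'s::finite \<Rightarrow> real \<Rightarrow> real) \<Rightarrow> 's \<Rightarrow> real" where
  "coef_a f i = pds [Some i] f 0 0"
definition coef_ff :: "(real^'s::finite \<Rightarrow> real \<Rightarrow> real) \<Rightarrow> 's \<Rightarrow> 's \<Rightarrow> real" where
  "coef_ff f i j = pds [Some i, Some j] f 0 0 / 2"
definition coef_fl :: "(real^'s::finite \<Rightarrow> real \<Rightarrow> real) \<Rightarrow> 's \<Rightarrow> real" where
  "coef_fl f i = pds [Some i, None] f 0 0"
definition coef_l :: "(real^'s::finite \<Rightarrow> real \<Rightarrow> real) \<Rightarrow> real" where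
  "coef_l f = pds [None] f 0 0"
definition coef_ll :: "(real^'s::finite \<Rightarrow> real \<Rightarrow> real) \<Rightarrow> real" where
  "coef_ll f = pds [None, None] f 0 0 / 2"

definition coef_K :: "(real^'s::finite \<Rightarrow> real \<Rightarrow> real) \<Rightarrow> real" where
  "coef_K f = (\<Sum>i\<in>UNIV. coef_a f i)"

definition coef_D :: "(real^'s::finite \<Rightarrow> real \<Rightarrow> real) \<Rightarrow> real" where
  "coef_D f = - coef_l f / coef_K f"

definition coef_R :: "(real^'s::finite \<Rightarrow> real \<Rightarrow> real) \<Rightarrow> real" where
  "coef_R f = - ((\<Sum>i\<in>UNIV. \<Sum>j\<in>UNIV. coef_ff f i j) * (coef_l f)^2
                 - coef_K f * (\<Sum>i\<in>UNIV. coef_fl f i) * coef_l f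
                 + (coef_K f)^2 * coef_ll f) / (coef_K f)^3"

definition critical :: "('s::finite \<Rightarrow> 'c \<Rightarrow> 'c) \<Rightarrow> (real^'s \<Rightarrow> real \<Rightarrow> real) \<Rightarrow> 'c \<Rightarrow> bool" where
  "critical sig f p \<longleftrightarrow> (\<Sum>i\<in>Lset sig p. coef_a f i) = 0"

definition assumption_B :: "('s::finite \<Rightarrow> 'c \<Rightarrow> 'c) \<Rightarrow> (real^'s \<Rightarrow> real \<Rightarrow> real) \<Rightarrow> bool" where
  "assumption_B sig f \<longleftrightarrow> f 0 0 = 0 \<and> (\<exists>p. critical sig f p) \<and>
     (\<forall>q. critical sig f q \<longleftrightarrow> (\<exists>r. critical sig f r \<and> Lset sig q = Lset sig r))"

definition gamma :: "('s::finite \<Rightarrow> 'c \<Rightarrow> 'c) \<Rightarrow> (real^'s \<Rightarrow> real \<Rightarrow> real) \<Rightarrow> ('c \<Rightarrow> real) \<Rightarrow> real \<Rightarrow> 'c \<Rightarrow> real" where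
  "gamma sig f x l p = f (\<chi> i. x (sig i p)) l"

text \<open>Left-hand side of the p-th bifurcation equation as function of x_p, when
  x_q = X(lambda) for all q strictly above p. (Every argument sig i p of gamma_p is either p
  or strictly above p, so the values assigned to other cells are irrelevant.)\<close>
definition peq :: "('s::finite \<Rightarrow> 'c \<Rightarrow> 'c) \<Rightarrow> (real^'s \<Rightarrow> real \<Rightarrow> real) \<Rightarrow> (real \<Rightarrow> real) \<Rightarrow> 'c \<Rightarrow> real \<Rightarrow> real \<Rightarrow> real" where
  "peq sig f X p xp l = gamma sig f ((\<lambda>q. if below sig p q \<and> q \<noteq> p then X l else 0)(p := xp)) l p"

definition Dplus :: "(real^'s::finite \<Rightarrow> real \<Rightarrow> real) \<Rightarrow> real" where
  "Dplus f = - coef_l f / coef_K f"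

definition Dminus :: "('s::finite \<Rightarrow> 'c \<Rightarrow> 'c) \<Rightarrow> (real^'s \<Rightarrow> real \<Rightarrow> real) \<Rightarrow> 'c \<Rightarrow> real" where
  "Dminus sig f p =
    (let L = Lset sig p;
         Q = (\<Sum>i\<in>L. \<Sum>j\<in>L. coef_ff f i j)
     in coef_l f / coef_K f * (1 + 2 * (\<Sum>i\<in>L. \<Sum>j\<in>- L. coef_ff f i j) / Q)
        - (\<Sum>i\<in>L. coef_fl f i) / Q)"

definition transcritical_conclusion ::
  "('s::finite \<Rightarrow> 'c \<Rightarrow> 'c) \<Rightarrow> (real^'s \<Rightarrow> real \<Rightarrow> real) \<Rightarrow> 'c \<Rightarrow> bool" where
  "transcritical_conclusion sig f p \<longleftrightarrow>
    (\<forall>X :: real \<Rightarrow> real.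
      (\<exists>\<eta>>0. \<forall>l. \<bar>l\<bar> < \<eta> \<longrightarrow> f (\<chi> i. X l) l = 0) \<and>
      (\<lambda>l. X l - coef_D f * l - coef_R f * l^2) \<in> O[nhds 0](\<lambda>l. l^3)
      \<longrightarrow>
      (\<exists>\<epsilon>>0. \<exists>\<delta>>0. \<exists>xplus xminus :: real \<Rightarrow> real.
         (\<forall>l. \<bar>l\<bar> < \<epsilon> \<longrightarrow>
             xplus l = X l \<and> \<bar>xplus l\<bar> < \<delta> \<and> \<bar>xminus l\<bar> < \<delta> \<and>
             (l \<noteq> 0 \<longrightarrow> xplus l \<noteq> xminus l) \<and>
             (\<forall>xp. \<bar>xp\<bar> < \<delta> \<longrightarrow> (peq sig f X p xp l = 0 \<longleftrightarrow> xp = xplus l \<or> xp = xminus l))) \<and>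
         (\<lambda>l. xplus l - Dplus f * l) \<in> O[nhds 0](\<lambda>l. l^2) \<and>
         (\<lambda>l. xminus l - Dminus sig f p * l) \<in> O[nhds 0](\<lambda>l. l^2)))"

end

theory Submission
  imports Defs
begin

definition dir :: "'s option \<Rightarrow> (real^'s::finite) \<times> real" where
  "dir v = (case v of Some i \<Rightarrow> (axis i 1, 0) | None \<Rightarrow> (0, 1))"
definition crd :: "'s option \<Rightarrow> (real^'s::finite) \<times> real \<Rightarrow> real" where
  "crd v z = (case v of Some i \<Rightarrow> fst z $ i | None \<Rightarrow> snd z)"
definition PP :: "'s option list \<Rightarrow> (real^'s::finite \<Rightarrow> real \<Rightarrow> real) \<Rightarrow> (real^'s) \<times> real \<Rightarrow> real" where
  "PP vs f z = pds vs f (fst z) (snd z)"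

lemma crd_add[simp]: "crd v (a + b) = crd v a + crd v b"
  by (cases v) (auto simp: crd_def)
lemma crd_diff[simp]: "crd v (a - b) = crd v a - crd v b"
  by (cases v) (auto simp: crd_def)
lemma crd_scale[simp]: "crd v (c *\<^sub>R a) = c * crd v a"
  by (cases v) (auto simp: crd_def)
lemma crd_zero[simp]: "crd v 0 = 0"
  by (cases v) (auto simp: crd_def)
lemma crd_dir: "crd u (dir v) = (if u = v then 1 else 0)"
  by (cases u; cases v) (auto simp: crd_def dir_def axis_def)

lemma sum_UNIV_option: "(\<Sum>v\<in>(UNIV::'s::finite option set). g v) = g None + (\<Sum>i\<in>UNIV. g (Some i))"
proof -
  have "(\<Sum>v\<in>(UNIV::'s option set). g v) = (\<Sum>v\<in>insert None (range Some). g v)"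
    by (simp add: UNIV_option_conv[symmetric])
  also have "\<dots> = g None + (\<Sum>v\<in>range Some. g v)"
    by (subst sum.insert) auto
  also have "(\<Sum>v\<in>range Some. g v) = (\<Sum>i\<in>UNIV. g (Some i))"
    by (subst sum.reindex) (auto simp: inj_on_def)
  finally show ?thesis .
qed

lemma crd_decomp: "z = (\<Sum>v\<in>UNIV. crd v z *\<^sub>R dir (v::'s::finite option))"
proof -
  obtain x l where z: "z = (x, l)" by (cases z)
  have 1: "(\<Sum>i\<in>UNIV. x $ i *\<^sub>R axis i (1::real)) = x"
    by (simp add: vec_eq_iff axis_def sum.delta' if_distrib cong: if_cong)
  show ?thesis
    unfolding sum_UNIV_option
    by (simp add: z crd_def dir_def fst_sum snd_sum 1 scaleR_Pair sum_prod)
qed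

lemma crd_le_norm: "\<bar>crd v z\<bar> \<le> norm z"
proof (cases v)
  case None
  then show ?thesis
    by (cases z) (simp add: crd_def norm_Pair real_le_rsqrt)
next
  case (Some i)
  obtain x l where z: "z = (x, l)" by (cases z)
  have "\<bar>x $ i\<bar> \<le> norm x" by (rule component_le_norm_cart)
  also have "norm x \<le> norm (x, l)"
    by (simp add: norm_Pair real_le_rsqrt)
  finally show ?thesis using Some z by (simp add: crd_def)
qed

lemma norm_dir[simp]: "norm (dir v) = 1"
  by (cases v) (auto simp: dir_def norm_Pair)

lemma norm_le_crd: "norm z \<le> (\<Sum>v\<in>UNIV. \<bar>crd (v::'s::finite option) z\<bar>)"
proof -
  have "norm z = norm (\<Sum>v\<in>UNIV. crd v z *\<^sub>R dir (v::'s option))"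
    by (subst crd_decomp) simp
  also have "\<dots> \<le> (\<Sum>v\<in>UNIV. norm (crd v z *\<^sub>R dir v))"
    by (rule norm_sum)
  finally show ?thesis by simp
qed

lemma PP_Nil: "PP [] f z = f (fst z) (snd z)"
  by (simp add: PP_def pds_def)

lemma PP_Cons: "PP (v#vs) f z = deriv (\<lambda>t. PP vs f (z + t *\<^sub>R dir v)) 0"
  by (cases v) (auto simp: PP_def pds_def pd_def dir_def scaleR_Pair)

lemma has_pd_PP: "has_pd v (pds vs f) (fst z) (snd z) \<longleftrightarrow>
   (\<lambda>t. PP vs f (z + t *\<^sub>R dir v)) differentiable (at 0)"
  by (cases v) (auto simp: PP_def has_pd_def dir_def scaleR_Pair)

lemma smooth_cont: "smooth_fun f \<Longrightarrow> continuous_on UNIV (PP vs f)"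
proof -
  assume "smooth_fun f"
  then have "continuous_on UNIV (\<lambda>(x, l). pds vs f x l)" by (simp add: smooth_fun_def)
  moreover have "(\<lambda>(x, l). pds vs f x l) = PP vs f"
    by (auto simp: PP_def fun_eq_iff)
  ultimately show ?thesis by simp
qed

lemma smooth_line_dir:
  assumes "smooth_fun f"
  shows "((\<lambda>t. PP vs f (z + t *\<^sub>R dir v)) has_real_derivative PP (v#vs) f (z + t0 *\<^sub>R dir v)) (at t0)"
proof -
  let ?z = "z + t0 *\<^sub>R dir v"
  let ?h = "\<lambda>t. PP vs f (?z + t *\<^sub>R dir v)"
  have "has_pd v (pds vs f) (fst ?z) (snd ?z)" using assms by (simp add: smooth_fun_def)
  then have "?h differentiable (at 0)" using has_pd_PP[of v vs f ?z] by blast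
  then have "(?h has_real_derivative deriv ?h 0) (at 0)"
    by (simp add: DERIV_deriv_iff_real_differentiable)
  then have d: "(?h has_real_derivative PP (v#vs) f ?z) (at 0)"
    by (simp add: PP_Cons)
  have "((\<lambda>t. ?h (t + - t0)) has_real_derivative PP (v#vs) f ?z) (at t0)"
    using DERIV_shift[of ?h "PP (v#vs) f ?z" t0 "-t0"] d by simp
  moreover have "(\<lambda>t. ?h (t + - t0)) = (\<lambda>t. PP vs f (z + t *\<^sub>R dir v))"
    by (auto simp: fun_eq_iff algebra_simps)
  ultimately show ?thesis by simp
qed


lemma sum_crd_le: "(\<Sum>v\<in>UNIV. \<bar>crd (v::'s::finite option) h\<bar>) \<le> real CARD('s option) * norm h"
proof -
  have "(\<Sum>v\<in>UNIV. \<bar>crd (v::'s::finite option) h\<bar>) \<le> (\<Sum>v\<in>(UNIV::'s option set). norm h)"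
    by (rule sum_mono) (rule crd_le_norm)
  then show ?thesis by simp
qed

lemma card_opt_pos: "real CARD('s::finite option) > 0"
  by simp

lemma crd_bounded_linear: "bounded_linear (\<lambda>h. \<Sum>v\<in>UNIV. crd (v::'s::finite option) h * c v)"
proof (rule bounded_linear_intro[where K = "\<Sum>v\<in>UNIV. \<bar>c v\<bar>"])
  fix x y :: "(real^'s) \<times> real" and r :: real
  show "(\<Sum>v\<in>UNIV. crd v (x + y) * c v) = (\<Sum>v\<in>UNIV. crd v x * c v) + (\<Sum>v\<in>UNIV. crd v y * c v)"
    by (simp add: distrib_right sum.distrib)
  show "(\<Sum>v\<in>UNIV. crd v (r *\<^sub>R x) * c v) = r *\<^sub>R (\<Sum>v\<in>UNIV. crd v x * c v)"
    by (simp add: sum_distrib_left mult.assoc)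
  have "norm (\<Sum>v\<in>UNIV. crd v x * c v) \<le> (\<Sum>v\<in>UNIV. \<bar>crd v x * c v\<bar>)"
    using sum_abs[of "\<lambda>v. crd v x * c v" UNIV] by simp
  also have "\<dots> \<le> (\<Sum>v\<in>UNIV. norm x * \<bar>c v\<bar>)"
    by (rule sum_mono) (simp add: abs_mult crd_le_norm mult_right_mono)
  finally show "norm (\<Sum>v\<in>UNIV. crd v x * c v) \<le> norm x * (\<Sum>v\<in>UNIV. \<bar>c v\<bar>)"
    by (simp add: sum_distrib_left)
qed

lemma frechet_from_partials:
  fixes g :: "(real^'s::finite) \<times> real \<Rightarrow> real"
  assumes der: "\<And>z v t. ((\<lambda>t. g (z + t *\<^sub>R dir v)) has_real_derivative dg v (z + t *\<^sub>R dir v)) (at t)"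
    and cont: "\<And>v. continuous_on UNIV (dg v)"
  shows "(g has_derivative (\<lambda>h. \<Sum>v\<in>UNIV. crd v h * dg v z0)) (at z0)"
proof -
  have key: "\<exists>\<delta>>0. \<forall>h. (\<Sum>v\<in>UNIV. \<bar>crd v h\<bar>) < \<delta> \<longrightarrow>
      \<bar>g (z0+h) - g z0 - (\<Sum>v\<in>UNIV. crd v h * dg v z0)\<bar> \<le> \<epsilon> * (\<Sum>v\<in>UNIV. \<bar>crd v h\<bar>)"
    if "\<epsilon> > 0" for \<epsilon>
  proof -
    have "\<forall>\<^sub>F \<xi> in nhds z0. \<forall>v. \<bar>dg v \<xi> - dg v z0\<bar> < \<epsilon>"
    proof (rule eventually_all_finite)
      fix v
      have "isCont (dg v) z0"
        using cont[of v] continuous_on_eq_continuous_at[OF open_UNIV] by blast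
      then have "((dg v) \<longlongrightarrow> dg v z0) (at z0)" by (simp add: isCont_def)
      then have "\<forall>\<^sub>F \<xi> in at z0. dist (dg v \<xi>) (dg v z0) < \<epsilon>"
        using tendstoD \<open>\<epsilon> > 0\<close> by blast
      then have "\<forall>\<^sub>F \<xi> in nhds z0. \<xi> \<noteq> z0 \<longrightarrow> dist (dg v \<xi>) (dg v z0) < \<epsilon>"
        by (simp add: eventually_at_filter)
      then show "\<forall>\<^sub>F \<xi> in nhds z0. \<bar>dg v \<xi> - dg v z0\<bar> < \<epsilon>"
        by eventually_elim (use \<open>\<epsilon> > 0\<close> in \<open>auto simp: dist_real_def\<close>)
    qed
    then obtain \<delta> where \<delta>: "\<delta> > 0" "\<And>\<xi> v. dist \<xi> z0 < \<delta> \<Longrightarrow> \<bar>dg v \<xi> - dg v z0\<bar> < \<epsilon>"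
      unfolding eventually_nhds_metric by blast
    have ind: "\<forall>h. (\<forall>v. v \<notin> S \<longrightarrow> crd v h = 0) \<longrightarrow> (\<Sum>v\<in>UNIV. \<bar>crd v h\<bar>) < \<delta> \<longrightarrow>
       \<bar>g (z0+h) - g z0 - (\<Sum>v\<in>S. crd v h * dg v z0)\<bar> \<le> \<epsilon> * (\<Sum>v\<in>S. \<bar>crd v h\<bar>)"
      if "finite S" for S
      using that
    proof (induction S rule: finite_induct)
      case empty
      show ?case
      proof (intro allI impI)
        fix h :: "(real^'s) \<times> real"
        assume "\<forall>v. v \<notin> {} \<longrightarrow> crd v h = 0"
        then have "h = 0" by (subst crd_decomp) simp
        then show "\<bar>g (z0+h) - g z0 - (\<Sum>v\<in>{}. crd v h * dg v z0)\<bar> \<le> \<epsilon> * (\<Sum>v\<in>{}. \<bar>crd v h\<bar>)"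
          by simp
      qed
    next
      case (insert w S)
      show ?case
      proof (intro allI impI)
        fix h :: "(real^'s) \<times> real"
        assume supp: "\<forall>v. v \<notin> insert w S \<longrightarrow> crd v h = 0"
          and small: "(\<Sum>v\<in>UNIV. \<bar>crd v h\<bar>) < \<delta>"
        define c where "c = crd w h"
        define h' where "h' = h - c *\<^sub>R dir w"
        have crd_h': "crd v h' = (if v = w then 0 else crd v h)" for v
          by (simp add: h'_def crd_dir c_def)
        have supp': "\<forall>v. v \<notin> S \<longrightarrow> crd v h' = 0"
          using supp by (simp add: crd_h')
        have "(\<Sum>v\<in>UNIV. \<bar>crd v h'\<bar>) \<le> (\<Sum>v\<in>UNIV. \<bar>crd v h\<bar>)"
          by (rule sum_mono) (simp add: crd_h')
        with small have small': "(\<Sum>v\<in>UNIV. \<bar>crd v h'\<bar>) < \<delta>" by linarith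
        have IH: "\<bar>g (z0+h') - g z0 - (\<Sum>v\<in>S. crd v h' * dg v z0)\<bar> \<le> \<epsilon> * (\<Sum>v\<in>S. \<bar>crd v h'\<bar>)"
          using insert.IH supp' small' by blast
        have e1: "(\<Sum>v\<in>S. crd v h' * dg v z0) = (\<Sum>v\<in>S. crd v h * dg v z0)"
          by (rule sum.cong) (use insert.hyps in \<open>auto simp: crd_h'\<close>)
        have e2: "(\<Sum>v\<in>S. \<bar>crd v h'\<bar>) = (\<Sum>v\<in>S. \<bar>crd v h\<bar>)"
          by (rule sum.cong) (use insert.hyps in \<open>auto simp: crd_h'\<close>)
        define k where "k t = g (z0 + h' + t *\<^sub>R dir w) - t * dg w z0" for t
        have kd: "(k has_real_derivative (dg w (z0 + h' + t *\<^sub>R dir w) - dg w z0)) (at t)" for t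
          unfolding k_def
          by (rule derivative_eq_intros der refl)+ simp
        have bnd: "norm (dg w (z0 + h' + t *\<^sub>R dir w) - dg w z0) \<le> \<epsilon>" if t: "t \<in> closed_segment 0 c" for t
        proof -
          have tc: "\<bar>t\<bar> \<le> \<bar>c\<bar>" using t by (auto simp: closed_segment_eq_real_ivl split: if_splits)
          have "norm (h' + t *\<^sub>R dir w) \<le> (\<Sum>v\<in>UNIV. \<bar>crd v (h' + t *\<^sub>R dir w)\<bar>)"
            by (rule norm_le_crd)
          also have "\<dots> \<le> (\<Sum>v\<in>UNIV. \<bar>crd v h\<bar>)"
            by (rule sum_mono) (use tc in \<open>simp add: crd_h' crd_dir c_def\<close>)
          finally have "dist (z0 + h' + t *\<^sub>R dir w) z0 < \<delta>"
            using small by (simp add: dist_norm)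
          then have "\<bar>dg w (z0 + h' + t *\<^sub>R dir w) - dg w z0\<bar> < \<epsilon>" by (rule \<delta>(2))
          then show ?thesis by simp
        qed
        have "norm (k c - k 0) \<le> \<epsilon> * norm (c - 0)"
          by (rule field_differentiable_bound[where S = "closed_segment 0 c" and f' = "\<lambda>t. dg w (z0 + h' + t *\<^sub>R dir w) - dg w z0"])
             (use kd bnd in \<open>auto intro: has_field_derivative_at_within\<close>)
        moreover have "k c = g (z0 + h) - c * dg w z0" by (simp add: k_def h'_def)
        moreover have "k 0 = g (z0 + h')" by (simp add: k_def)
        ultimately have seg: "\<bar>g (z0 + h) - g (z0 + h') - c * dg w z0\<bar> \<le> \<epsilon> * \<bar>c\<bar>" by simp
        have "(\<Sum>v\<in>insert w S. crd v h * dg v z0) = c * dg w z0 + (\<Sum>v\<in>S. crd v h * dg v z0)"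
          using insert.hyps by (simp add: c_def)
        moreover have "(\<Sum>v\<in>insert w S. \<bar>crd v h\<bar>) = \<bar>c\<bar> + (\<Sum>v\<in>S. \<bar>crd v h\<bar>)"
          using insert.hyps by (simp add: c_def)
        ultimately show "\<bar>g (z0+h) - g z0 - (\<Sum>v\<in>insert w S. crd v h * dg v z0)\<bar> \<le> \<epsilon> * (\<Sum>v\<in>insert w S. \<bar>crd v h\<bar>)"
          using IH seg e1 e2 by (simp add: distrib_left)
      qed
    qed
    show ?thesis
      using ind[of UNIV] \<delta>(1) by auto
  qed
  show ?thesis
    unfolding has_derivative_at_alt
  proof (intro conjI allI impI)
    show "bounded_linear (\<lambda>h. \<Sum>v\<in>UNIV. crd v h * dg v z0)" by (rule crd_bounded_linear)
    fix e :: real assume "e > 0"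
    define C where "C = real CARD('s option)"
    have C: "C > 0" by (simp add: C_def)
    obtain \<delta> where \<delta>: "\<delta> > 0" "\<And>h. (\<Sum>v\<in>UNIV. \<bar>crd v h\<bar>) < \<delta> \<Longrightarrow>
      \<bar>g (z0+h) - g z0 - (\<Sum>v\<in>UNIV. crd v h * dg v z0)\<bar> \<le> (e / C) * (\<Sum>v\<in>UNIV. \<bar>crd v h\<bar>)"
      using key[of "e / C"] \<open>e > 0\<close> C by auto
    show "\<exists>d>0. \<forall>y. norm (y - z0) < d \<longrightarrow>
       norm (g y - g z0 - (\<Sum>v\<in>UNIV. crd v (y - z0) * dg v z0)) \<le> e * norm (y - z0)"
    proof (intro exI[of _ "\<delta> / C"] conjI allI impI)
      show "\<delta> / C > 0" using \<delta> C by simp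
      fix y assume y: "norm (y - z0) < \<delta> / C"
      have s: "(\<Sum>v\<in>UNIV. \<bar>crd v (y - z0)\<bar>) \<le> C * norm (y - z0)"
        using sum_crd_le[of "y - z0"] by (simp add: C_def)
      also have "\<dots> < \<delta>" using y C by (simp add: field_simps)
      finally have "\<bar>g (z0 + (y - z0)) - g z0 - (\<Sum>v\<in>UNIV. crd v (y - z0) * dg v z0)\<bar>
          \<le> (e / C) * (\<Sum>v\<in>UNIV. \<bar>crd v (y - z0)\<bar>)" by (rule \<delta>(2))
      also have "\<dots> \<le> (e / C) * (C * norm (y - z0))"
        by (rule mult_left_mono[OF s]) (use \<open>e > 0\<close> C in simp)
      also have "\<dots> = e * norm (y - z0)" using C by simp
      finally show "norm (g y - g z0 - (\<Sum>v\<in>UNIV. crd v (y - z0) * dg v z0)) \<le> e * norm (y - z0)"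
        by simp
    qed
  qed
qed


lemma smooth_frechet:
  assumes "smooth_fun f"
  shows "(PP vs f has_derivative (\<lambda>h. \<Sum>v\<in>UNIV. crd v h * PP (v#vs) f z0)) (at z0)"
  by (rule frechet_from_partials) (use assms smooth_line_dir smooth_cont in auto)

lemma smooth_line:
  assumes "smooth_fun f"
  shows "((\<lambda>t. PP vs f (z + t *\<^sub>R w)) has_real_derivative
           (\<Sum>v\<in>UNIV. crd v w * PP (v#vs) f (z + t *\<^sub>R w))) (at t)"
proof -
  have d1: "((\<lambda>t. z + t *\<^sub>R w) has_derivative (\<lambda>s. s *\<^sub>R w)) (at t)"
    by (rule derivative_eq_intros refl)+ simp
  have d2: "(PP vs f has_derivative (\<lambda>h. \<Sum>v\<in>UNIV. crd v h * PP (v#vs) f (z + t *\<^sub>R w))) (at (z + t *\<^sub>R w))"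
    by (rule smooth_frechet[OF assms])
  have "((\<lambda>t. PP vs f (z + t *\<^sub>R w)) has_derivative
      (\<lambda>s. \<Sum>v\<in>UNIV. crd v (s *\<^sub>R w) * PP (v#vs) f (z + t *\<^sub>R w))) (at t)"
    using has_derivative_compose[OF d1 d2] by (simp add: o_def)
  moreover have "(\<lambda>s. \<Sum>v\<in>UNIV. crd v (s *\<^sub>R w) * PP (v#vs) f (z + t *\<^sub>R w))
     = (*) (\<Sum>v\<in>UNIV. crd v w * PP (v#vs) f (z + t *\<^sub>R w))"
    by (auto simp: fun_eq_iff sum_distrib_left sum_distrib_right mult_ac)
  ultimately show ?thesis by (simp add: has_field_derivative_def)
qed

lemma cont_at_PP: "smooth_fun f \<Longrightarrow> isCont (PP vs f) z"
  using smooth_cont continuous_on_eq_continuous_at[OF open_UNIV] by blast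

lemma eventually_near_PP:
  assumes "smooth_fun f" "e > 0"
  shows "\<forall>\<^sub>F z in nhds z0. \<bar>PP vs f z - PP vs f z0\<bar> < e"
proof -
  have "((PP vs f) \<longlongrightarrow> PP vs f z0) (at z0)" using cont_at_PP[OF assms(1)] by (simp add: isCont_def)
  then have "\<forall>\<^sub>F \<xi> in at z0. dist (PP vs f \<xi>) (PP vs f z0) < e"
    using tendstoD assms(2) by blast
  then have "\<forall>\<^sub>F \<xi> in nhds z0. \<xi> \<noteq> z0 \<longrightarrow> dist (PP vs f \<xi>) (PP vs f z0) < e"
    by (simp add: eventually_at_filter)
  then show ?thesis
    by eventually_elim (use assms(2) in \<open>auto simp: dist_real_def\<close>)
qed

definition SC :: "(real^'s::finite) \<times> real \<Rightarrow> real" where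
  "SC z = (\<Sum>v\<in>UNIV. \<bar>crd (v::'s option) z\<bar>)"

lemma SC_scale: "SC (t *\<^sub>R z) = \<bar>t\<bar> * SC z"
  by (simp add: SC_def abs_mult sum_distrib_left)

lemma SC_nonneg: "SC z \<ge> 0"
  by (simp add: SC_def sum_nonneg)

lemma lip_PP:
  assumes "smooth_fun f"
  shows "\<exists>M. \<forall>\<^sub>F z in nhds 0. \<bar>PP vs f z - PP vs f 0\<bar> \<le> M * SC z"
proof -
  have "\<forall>\<^sub>F \<xi> in nhds 0. \<forall>v. \<bar>PP (v#vs) f \<xi> - PP (v#vs) f 0\<bar> < 1"
    by (rule eventually_all_finite) (rule eventually_near_PP[OF assms], simp)
  then obtain \<delta> where \<delta>: "\<delta> > 0" "\<And>\<xi> v. dist \<xi> 0 < \<delta> \<Longrightarrow> \<bar>PP (v#vs) f \<xi> - PP (v#vs) f 0\<bar> < 1"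
    unfolding eventually_nhds_metric by blast
  define M where "M = (\<Sum>v\<in>UNIV. \<bar>PP (v#vs) f 0\<bar> + 1)"
  have Mv: "\<bar>PP (v#vs) f 0\<bar> + 1 \<le> M" for v
    unfolding M_def by (rule member_le_sum) auto
  have "\<bar>PP vs f z - PP vs f 0\<bar> \<le> M * SC z" if z: "dist z 0 < \<delta>" for z
  proof -
    define \<psi> where "\<psi> t = PP vs f (0 + t *\<^sub>R z)" for t
    have d: "(\<psi> has_real_derivative (\<Sum>v\<in>UNIV. crd v z * PP (v#vs) f (0 + t *\<^sub>R z))) (at t)" for t
      unfolding \<psi>_def by (rule smooth_line[OF assms])
    have b: "norm (\<Sum>v\<in>UNIV. crd v z * PP (v#vs) f (0 + t *\<^sub>R z)) \<le> M * SC z" if t: "t \<in> {0..1}" for t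
    proof -
      have "norm (t *\<^sub>R z) \<le> norm z" using t by (simp add: mult_left_le_one_le)
      then have dt: "dist (t *\<^sub>R z) 0 < \<delta>" using z by simp
      have "norm (\<Sum>v\<in>UNIV. crd v z * PP (v#vs) f (0 + t *\<^sub>R z)) \<le> (\<Sum>v\<in>UNIV. \<bar>crd v z * PP (v#vs) f (t *\<^sub>R z)\<bar>)"
        using sum_abs[of "\<lambda>v. crd v z * PP (v#vs) f (t *\<^sub>R z)" UNIV] by simp
      also have "\<dots> \<le> (\<Sum>v\<in>UNIV. \<bar>crd v z\<bar> * M)"
      proof (rule sum_mono)
        fix v :: "'a option"
        have "\<bar>PP (v#vs) f (t *\<^sub>R z)\<bar> \<le> M" using \<delta>(2)[OF dt, of v] Mv[of v] by linarith
        then show "\<bar>crd v z * PP (v#vs) f (t *\<^sub>R z)\<bar> \<le> \<bar>crd v z\<bar> * M"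
          by (simp add: abs_mult mult_left_mono)
      qed
      finally show ?thesis by (simp add: SC_def sum_distrib_left mult.commute)
    qed
    have "norm (\<psi> 1 - \<psi> 0) \<le> M * SC z * norm (1 - (0::real))"
      by (rule field_differentiable_bound[where S = "{0..1}"])
         (use d b in \<open>auto intro: has_field_derivative_at_within\<close>)
    then show ?thesis by (simp add: \<psi>_def)
  qed
  then show ?thesis
    unfolding eventually_nhds_metric using \<delta>(1) by blast
qed

lemma second_PP:
  assumes "smooth_fun f"
  shows "\<exists>M. \<forall>\<^sub>F z in nhds 0.
     \<bar>PP vs f z - PP vs f 0 - (\<Sum>v\<in>UNIV. crd v z * PP (v#vs) f 0)\<bar> \<le> M * (SC z)^2"
proof -
  have "\<forall>v. \<exists>M. \<forall>\<^sub>F z in nhds 0. \<bar>PP (v#vs) f z - PP (v#vs) f 0\<bar> \<le> M * SC z"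
    using lip_PP[OF assms] by blast
  then obtain Mf where Mf: "\<And>v. \<forall>\<^sub>F z in nhds 0. \<bar>PP (v#vs) f z - PP (v#vs) f 0\<bar> \<le> Mf v * SC z"
    by metis
  have "\<forall>\<^sub>F z in nhds 0. \<forall>v. \<bar>PP (v#vs) f z - PP (v#vs) f 0\<bar> \<le> Mf v * SC z"
    by (rule eventually_all_finite) (rule Mf)
  then obtain \<delta> where \<delta>: "\<delta> > 0" "\<And>\<xi> v. dist \<xi> 0 < \<delta> \<Longrightarrow> \<bar>PP (v#vs) f \<xi> - PP (v#vs) f 0\<bar> \<le> Mf v * SC \<xi>"
    unfolding eventually_nhds_metric by blast
  define M where "M = (\<Sum>v\<in>UNIV. \<bar>Mf v\<bar>)"
  have Mv: "\<bar>Mf v\<bar> \<le> M" for v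
    unfolding M_def by (rule member_le_sum) auto
  have "\<bar>PP vs f z - PP vs f 0 - (\<Sum>v\<in>UNIV. crd v z * PP (v#vs) f 0)\<bar> \<le> M * (SC z)^2"
    if z: "dist z 0 < \<delta>" for z
  proof -
    define \<psi> where "\<psi> t = PP vs f (0 + t *\<^sub>R z) - t * (\<Sum>v\<in>UNIV. crd v z * PP (v#vs) f 0)" for t
    have d: "(\<psi> has_real_derivative (\<Sum>v\<in>UNIV. crd v z * PP (v#vs) f (0 + t *\<^sub>R z))
               - (\<Sum>v\<in>UNIV. crd v z * PP (v#vs) f 0)) (at t)" for t
      unfolding \<psi>_def
      by (rule derivative_eq_intros smooth_line[OF assms] refl)+ simp
    have b: "norm ((\<Sum>v\<in>UNIV. crd v z * PP (v#vs) f (0 + t *\<^sub>R z))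
               - (\<Sum>v\<in>UNIV. crd v z * PP (v#vs) f 0)) \<le> M * (SC z)^2" if t: "t \<in> {0..1}" for t
    proof -
      have "norm (t *\<^sub>R z) \<le> norm z" using t by (simp add: mult_left_le_one_le)
      then have dt: "dist (t *\<^sub>R z) 0 < \<delta>" using z by simp
      have st: "SC (t *\<^sub>R z) \<le> SC z" using t SC_nonneg[of z]
        by (simp add: SC_scale mult_left_le_one_le)
      have "norm ((\<Sum>v\<in>UNIV. crd v z * PP (v#vs) f (0 + t *\<^sub>R z)) - (\<Sum>v\<in>UNIV. crd v z * PP (v#vs) f 0))
          = \<bar>\<Sum>v\<in>UNIV. crd v z * (PP (v#vs) f (t *\<^sub>R z) - PP (v#vs) f 0)\<bar>"
        by (simp add: sum_subtractf[symmetric] right_diff_distrib)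
      also have "\<dots> \<le> (\<Sum>v\<in>UNIV. \<bar>crd v z * (PP (v#vs) f (t *\<^sub>R z) - PP (v#vs) f 0)\<bar>)"
        by (rule sum_abs)
      also have "\<dots> \<le> (\<Sum>v\<in>UNIV. \<bar>crd v z\<bar> * (M * SC z))"
      proof (rule sum_mono)
        fix v :: "'a option"
        have "\<bar>PP (v#vs) f (t *\<^sub>R z) - PP (v#vs) f 0\<bar> \<le> Mf v * SC (t *\<^sub>R z)" by (rule \<delta>(2)[OF dt])
        also have "\<dots> \<le> \<bar>Mf v\<bar> * SC (t *\<^sub>R z)" by (simp add: SC_nonneg mult_right_mono)
        also have "\<dots> \<le> M * SC z" by (rule mult_mono[OF Mv st]) (use Mv[of v] in \<open>auto simp: SC_nonneg\<close>)
        finally show "\<bar>crd v z * (PP (v#vs) f (t *\<^sub>R z) - PP (v#vs) f 0)\<bar> \<le> \<bar>crd v z\<bar> * (M * SC z)"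
          by (simp add: abs_mult mult_left_mono)
      qed
      also have "\<dots> = M * (SC z)^2" by (simp add: SC_def sum_distrib_right sum_distrib_left[symmetric] power2_eq_square mult_ac)
      finally show ?thesis .
    qed
    have "norm (\<psi> 1 - \<psi> 0) \<le> M * (SC z)^2 * norm (1 - (0::real))"
      by (rule field_differentiable_bound[where S = "{0..1}"])
         (use d b in \<open>auto intro: has_field_derivative_at_within\<close>)
    then show ?thesis by (simp add: \<psi>_def)
  qed
  then show ?thesis
    unfolding eventually_nhds_metric using \<delta>(1) by blast
qed


lemma swap_approx:
  assumes sm: "smooth_fun f" and h: "h > 0"
  shows "\<exists>p1 p2. norm (p1 - z) \<le> 2*h \<and> norm (p2 - z) \<le> 2*h \<and>
           PP (v#u#vs) f p1 = PP (u#v#vs) f p2"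
proof -
  define F where "F s t = PP vs f (z + s *\<^sub>R dir u + t *\<^sub>R dir v)" for s t
  have dFs: "((\<lambda>s. F s t) has_real_derivative PP (u#vs) f (z + s *\<^sub>R dir u + t *\<^sub>R dir v)) (at s)" for s t
  proof -
    have "((\<lambda>s. PP vs f (z + t *\<^sub>R dir v + s *\<^sub>R dir u)) has_real_derivative
            PP (u#vs) f (z + t *\<^sub>R dir v + s *\<^sub>R dir u)) (at s)"
      by (rule smooth_line_dir[OF sm])
    moreover have "(\<lambda>s. PP vs f (z + t *\<^sub>R dir v + s *\<^sub>R dir u)) = (\<lambda>s. F s t)"
      by (auto simp: F_def fun_eq_iff add_ac)
    moreover have "z + t *\<^sub>R dir v + s *\<^sub>R dir u = z + s *\<^sub>R dir u + t *\<^sub>R dir v" by (simp add: add_ac)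
    ultimately show ?thesis by simp
  qed
  have dFt: "((\<lambda>t. F s t) has_real_derivative PP (v#vs) f (z + s *\<^sub>R dir u + t *\<^sub>R dir v)) (at t)" for s t
    unfolding F_def by (rule smooth_line_dir[OF sm])
  define \<Delta> where "\<Delta> = F h h - F h 0 - F 0 h + F 0 0"
  have dphi: "((\<lambda>s. F s h - F s 0) has_real_derivative (PP (u#vs) f (z + s *\<^sub>R dir u + h *\<^sub>R dir v) - PP (u#vs) f (z + s *\<^sub>R dir u + 0 *\<^sub>R dir v))) (at s)" for s
    by (rule DERIV_diff[OF dFs dFs])
  obtain s1 where s1: "0 < s1" "s1 < h"
    "(F h h - F h 0) - (F 0 h - F 0 0) = (h - 0) * (PP (u#vs) f (z + s1 *\<^sub>R dir u + h *\<^sub>R dir v) - PP (u#vs) f (z + s1 *\<^sub>R dir u + 0 *\<^sub>R dir v))"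
    using MVT2[OF h, of "\<lambda>s. F s h - F s 0" "\<lambda>s. PP (u#vs) f (z + s *\<^sub>R dir u + h *\<^sub>R dir v) - PP (u#vs) f (z + s *\<^sub>R dir u + 0 *\<^sub>R dir v)"]
    using dphi by blast
  obtain t1 where t1: "0 < t1" "t1 < h"
    "PP (u#vs) f (z + s1 *\<^sub>R dir u + h *\<^sub>R dir v) - PP (u#vs) f (z + s1 *\<^sub>R dir u + 0 *\<^sub>R dir v)
      = (h - 0) * PP (v#u#vs) f (z + s1 *\<^sub>R dir u + t1 *\<^sub>R dir v)"
    using MVT2[OF h, of "\<lambda>t. PP (u#vs) f (z + s1 *\<^sub>R dir u + t *\<^sub>R dir v)" "\<lambda>t. PP (v#u#vs) f (z + s1 *\<^sub>R dir u + t *\<^sub>R dir v)"]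
    using smooth_line_dir[OF sm] by blast
  have dpsi: "((\<lambda>t. F h t - F 0 t) has_real_derivative (PP (v#vs) f (z + h *\<^sub>R dir u + t *\<^sub>R dir v) - PP (v#vs) f (z + 0 *\<^sub>R dir u + t *\<^sub>R dir v))) (at t)" for t
    by (rule DERIV_diff[OF dFt dFt])
  obtain t2 where t2: "0 < t2" "t2 < h"
    "(F h h - F 0 h) - (F h 0 - F 0 0) = (h - 0) * (PP (v#vs) f (z + h *\<^sub>R dir u + t2 *\<^sub>R dir v) - PP (v#vs) f (z + 0 *\<^sub>R dir u + t2 *\<^sub>R dir v))"
    using MVT2[OF h, of "\<lambda>t. F h t - F 0 t" "\<lambda>t. PP (v#vs) f (z + h *\<^sub>R dir u + t *\<^sub>R dir v) - PP (v#vs) f (z + 0 *\<^sub>R dir u + t *\<^sub>R dir v)"]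
    using dpsi by blast
  have dK: "((\<lambda>s. PP (v#vs) f (z + s *\<^sub>R dir u + t2 *\<^sub>R dir v)) has_real_derivative
        PP (u#v#vs) f (z + s *\<^sub>R dir u + t2 *\<^sub>R dir v)) (at s)" for s
  proof -
    have "((\<lambda>s. PP (v#vs) f (z + t2 *\<^sub>R dir v + s *\<^sub>R dir u)) has_real_derivative
            PP (u#v#vs) f (z + t2 *\<^sub>R dir v + s *\<^sub>R dir u)) (at s)"
      by (rule smooth_line_dir[OF sm])
    moreover have "(\<lambda>s. PP (v#vs) f (z + t2 *\<^sub>R dir v + s *\<^sub>R dir u)) = (\<lambda>s. PP (v#vs) f (z + s *\<^sub>R dir u + t2 *\<^sub>R dir v))"
      by (auto simp: fun_eq_iff add_ac)
    moreover have "z + t2 *\<^sub>R dir v + s *\<^sub>R dir u = z + s *\<^sub>R dir u + t2 *\<^sub>R dir v" by (simp add: add_ac)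
    ultimately show ?thesis by simp
  qed
  obtain s2 where s2: "0 < s2" "s2 < h"
    "PP (v#vs) f (z + h *\<^sub>R dir u + t2 *\<^sub>R dir v) - PP (v#vs) f (z + 0 *\<^sub>R dir u + t2 *\<^sub>R dir v)
      = (h - 0) * PP (u#v#vs) f (z + s2 *\<^sub>R dir u + t2 *\<^sub>R dir v)"
    using MVT2[OF h, of "\<lambda>s. PP (v#vs) f (z + s *\<^sub>R dir u + t2 *\<^sub>R dir v)" "\<lambda>s. PP (u#v#vs) f (z + s *\<^sub>R dir u + t2 *\<^sub>R dir v)"]
    using dK by blast
  have "h * (h * PP (v#u#vs) f (z + s1 *\<^sub>R dir u + t1 *\<^sub>R dir v)) = h * (h * PP (u#v#vs) f (z + s2 *\<^sub>R dir u + t2 *\<^sub>R dir v))"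
    using s1(3) t1(3) t2(3) s2(3) by (simp add: algebra_simps)
  then have eq: "PP (v#u#vs) f (z + s1 *\<^sub>R dir u + t1 *\<^sub>R dir v) = PP (u#v#vs) f (z + s2 *\<^sub>R dir u + t2 *\<^sub>R dir v)"
    using h by simp
  have n: "norm (z + a *\<^sub>R dir u + b *\<^sub>R dir v - z) \<le> 2*h" if "0 < a" "a < h" "0 < b" "b < h" for a b
  proof -
    have "norm (z + a *\<^sub>R dir u + b *\<^sub>R dir v - z) = norm (a *\<^sub>R dir u + b *\<^sub>R dir v)" by simp
    also have "\<dots> \<le> norm (a *\<^sub>R dir u) + norm (b *\<^sub>R dir v)" by (rule norm_triangle_ineq)
    also have "\<dots> \<le> 2*h" using that by simp
    finally show ?thesis .
  qed
  show ?thesis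
    using eq n[OF s1(1,2) t1(1,2)] n[OF s2(1,2) t2(1,2)] by blast
qed

lemma smooth_swap:
  assumes sm: "smooth_fun f"
  shows "PP (u#v#vs) f z = PP (v#u#vs) f z"
proof (rule ccontr)
  assume ne: "PP (u#v#vs) f z \<noteq> PP (v#u#vs) f z"
  define e where "e = \<bar>PP (u#v#vs) f z - PP (v#u#vs) f z\<bar> / 2"
  have e: "e > 0" using ne by (simp add: e_def)
  have "\<forall>\<^sub>F p in nhds z. \<bar>PP (u#v#vs) f p - PP (u#v#vs) f z\<bar> < e \<and> \<bar>PP (v#u#vs) f p - PP (v#u#vs) f z\<bar> < e"
    using eventually_near_PP[OF sm e] by (simp add: eventually_conj_iff)
  then obtain \<delta> where \<delta>: "\<delta> > 0" "\<And>p. dist p z < \<delta> \<Longrightarrow> \<bar>PP (u#v#vs) f p - PP (u#v#vs) f z\<bar> < e \<and> \<bar>PP (v#u#vs) f p - PP (v#u#vs) f z\<bar> < e"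
    unfolding eventually_nhds_metric by blast
  obtain p1 p2 where p: "norm (p1 - z) \<le> 2*(\<delta>/4)" "norm (p2 - z) \<le> 2*(\<delta>/4)" "PP (v#u#vs) f p1 = PP (u#v#vs) f p2"
    using swap_approx[OF sm, of "\<delta>/4" z v u vs] \<delta>(1) by auto
  have "dist p1 z < \<delta>" "dist p2 z < \<delta>" using p(1,2) \<delta>(1) by (auto simp: dist_norm)
  then have "\<bar>PP (v#u#vs) f p1 - PP (v#u#vs) f z\<bar> < e" "\<bar>PP (u#v#vs) f p2 - PP (u#v#vs) f z\<bar> < e"
    using \<delta>(2) by blast+
  moreover have "\<bar>PP (u#v#vs) f z - PP (v#u#vs) f z\<bar> \<le> \<bar>PP (v#u#vs) f p1 - PP (v#u#vs) f z\<bar> + \<bar>PP (u#v#vs) f p2 - PP (u#v#vs) f z\<bar>"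
    using p(3) by linarith
  ultimately show False by (simp add: e_def)
qed


lemma taylor2:
  fixes g :: "real \<Rightarrow> real"
  assumes d1: "\<And>t. (g has_real_derivative g1 t) (at t)"
    and d2: "\<And>t. (g1 has_real_derivative g2 t) (at t)"
  shows "\<exists>\<xi>. \<bar>\<xi> - a\<bar> \<le> \<bar>x - a\<bar> \<and> g x = g a + g1 a * (x - a) + g2 \<xi> / 2 * (x - a)^2"
proof (cases "x = a")
  case True
  then show ?thesis by (intro exI[of _ a]) simp
next
  case False
  define diff where "diff m = (if m = 0 then g else if m = 1 then g1 else g2)" for m :: nat
  have D: "\<forall>m t. m < 2 \<and> min a x \<le> t \<and> t \<le> max a x \<longrightarrow> DERIV (diff m) t :> diff (Suc m) t"
    using d1 d2 by (auto simp: diff_def less_2_cases_iff)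
  obtain t where t: "(if x < a then x < t \<and> t < a else a < t \<and> t < x)"
    "g x = (\<Sum>m<2. (diff m a / fact m) * (x - a)^m) + (diff 2 t / fact 2) * (x - a)^2"
    using Taylor[of 2 diff g "min a x" "max a x" a x] D False by (auto simp: diff_def)
  have "\<bar>t - a\<bar> \<le> \<bar>x - a\<bar>" using t(1) by (auto split: if_splits)
  moreover have "g x = g a + g1 a * (x - a) + g2 t / 2 * (x - a)^2"
    using t(2) by (simp add: diff_def numeral_2_eq_2)
  ultimately show ?thesis by blast
qed

lemma rolle_zero:
  fixes g :: "real \<Rightarrow> real"
  assumes "a < b" "g a = g b" "\<And>t. (g has_real_derivative g1 t) (at t)"
  shows "\<exists>z. a < z \<and> z < b \<and> g1 z = 0"
proof -
  obtain z where "a < z" "z < b" "g b - g a = (b - a) * g1 z"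
    using MVT2[OF assms(1), of g g1] assms(3) by blast
  then show ?thesis using assms(1,2) by auto
qed

lemma three_zeros_sorted:
  fixes g :: "real \<Rightarrow> real"
  assumes d1: "\<And>t. (g has_real_derivative g1 t) (at t)"
    and d2: "\<And>t. (g1 has_real_derivative g2 t) (at t)"
    and "x < y" "y < z" "g x = 0" "g y = 0" "g z = 0"
  shows "\<exists>t. x < t \<and> t < z \<and> g2 t = 0"
proof -
  obtain p where p: "x < p" "p < y" "g1 p = 0" using rolle_zero[of x y g g1] assms by auto
  obtain q where q: "y < q" "q < z" "g1 q = 0" using rolle_zero[of y z g g1] assms by auto
  obtain t where "p < t" "t < q" "g2 t = 0" using rolle_zero[of p q g1 g2] p q d2 by auto
  then show ?thesis using p q by (intro exI[of _ t]) auto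
qed

lemma at_most_two_zeros:
  fixes g :: "real \<Rightarrow> real"
  assumes d1: "\<And>t. (g has_real_derivative g1 t) (at t)"
    and d2: "\<And>t. (g1 has_real_derivative g2 t) (at t)"
    and nz: "\<And>t. \<bar>t\<bar> < \<delta> \<Longrightarrow> g2 t \<noteq> 0"
    and "\<bar>x\<bar> < \<delta>" "\<bar>y\<bar> < \<delta>" "\<bar>z\<bar> < \<delta>" "g x = 0" "g y = 0" "g z = 0"
    and "x \<noteq> y" "y \<noteq> z" "x \<noteq> z"
  shows False
proof -
  have *: "False" if H: "a < b" "b < c" "g a = 0" "g b = 0" "g c = 0" "\<bar>a\<bar> < \<delta>" "\<bar>c\<bar> < \<delta>" for a b c
  proof -
    obtain t where "a < t" "t < c" "g2 t = 0" using three_zeros_sorted[OF d1 d2 H(1-5)] by blast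
    moreover have "\<bar>t\<bar> < \<delta>" using calculation H by auto
    ultimately show False using nz by blast
  qed
  consider "x < y" "y < z" | "x < z" "z < y" | "y < x" "x < z" | "y < z" "z < x" | "z < x" "x < y" | "z < y" "y < x"
    using assms(10-12) by linarith
  then show False
    by cases (use * assms(4-9) in blast)+
qed

lemma ivt_sign:
  fixes g :: "real \<Rightarrow> real"
  assumes d1: "\<And>t. (g has_real_derivative g1 t) (at t)"
    and "g a * g b \<le> 0"
  shows "\<exists>x. min a b \<le> x \<and> x \<le> max a b \<and> g x = 0"
proof -
  have c: "continuous_on S g" for S
    using d1 by (meson DERIV_isCont continuous_at_imp_continuous_on)
  have **: "\<exists>x. p \<le> x \<and> x \<le> q \<and> g x = 0" if "p \<le> q" "g p * g q \<le> 0" for p q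
  proof (cases "g p \<le> 0")
    case True
    then have "g q \<ge> 0 \<or> g p = 0" using that(2) by (auto simp: mult_le_0_iff)
    then show ?thesis
    proof
      assume "g q \<ge> 0"
      then show ?thesis using IVT'[of g p 0 q] True that(1) c by auto
    qed (use that(1) in auto)
  next
    case False
    then have "g q \<le> 0" using that(2) by (auto simp: mult_le_0_iff)
    then show ?thesis using IVT2'[of g q 0 p] False that(1) c by auto
  qed
  show ?thesis
  proof (cases "a \<le> b")
    case True then show ?thesis using **[of a b] assms(2) by auto
  next
    case False then show ?thesis using **[of b a] assms(2) by (auto simp: mult.commute)
  qed
qed


definition wL :: "'s set \<Rightarrow> (real^'s::finite) \<times> real" where
  "wL L = ((\<chi> i. if i \<in> L then 1 else 0), 0)"

lemma sum_crd_wL: "(\<Sum>v\<in>UNIV. crd v (wL L) * g v) = (\<Sum>i\<in>L. g (Some i))"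
proof -
  have "(\<Sum>v\<in>UNIV. crd v (wL L) * g v) = (\<Sum>i\<in>UNIV. if i \<in> L then g (Some i) else 0)"
    unfolding sum_UNIV_option by (simp add: crd_def wL_def) (rule sum.cong, auto)
  also have "\<dots> = (\<Sum>i\<in>UNIV \<inter> L. g (Some i))"
    by (rule sum.inter_restrict[symmetric]) simp
  finally show ?thesis by simp
qed

lemma line_L:
  assumes "smooth_fun f"
  shows "((\<lambda>b. PP vs f (z + b *\<^sub>R wL L)) has_real_derivative
           (\<Sum>i\<in>L. PP (Some i # vs) f (z + b *\<^sub>R wL L))) (at b)"
  using smooth_line[OF assms, of vs z "wL L" b] by (simp add: sum_crd_wL)

lemma ev_sum_bound:
  fixes g :: "'i \<Rightarrow> 'z \<Rightarrow> real"
  assumes "finite I" "\<And>i. i \<in> I \<Longrightarrow> \<exists>M. \<forall>\<^sub>F z in F. \<bar>g i z\<bar> \<le> M * B z"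
  shows "\<exists>M. \<forall>\<^sub>F z in F. \<bar>\<Sum>i\<in>I. g i z\<bar> \<le> M * B z"
  using assms
proof (induction I rule: finite_induct)
  case empty
  show ?case by (intro exI[of _ 0]) simp
next
  case (insert a I)
  obtain M1 where M1: "\<forall>\<^sub>F z in F. \<bar>g a z\<bar> \<le> M1 * B z" using insert.prems by blast
  obtain M2 where M2: "\<forall>\<^sub>F z in F. \<bar>\<Sum>i\<in>I. g i z\<bar> \<le> M2 * B z" using insert.IH insert.prems by blast
  have "\<forall>\<^sub>F z in F. \<bar>\<Sum>i\<in>insert a I. g i z\<bar> \<le> (M1 + M2) * B z"
    using M1 M2
  proof eventually_elim
    case (elim z)
    have "\<bar>\<Sum>i\<in>insert a I. g i z\<bar> = \<bar>g a z + (\<Sum>i\<in>I. g i z)\<bar>" using insert.hyps by simp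
    also have "\<dots> \<le> \<bar>g a z\<bar> + \<bar>\<Sum>i\<in>I. g i z\<bar>" by (rule abs_triangle_ineq)
    finally show ?case using elim by (simp add: distrib_right)
  qed
  then show ?case by blast
qed

definition Phi1 :: "'s set \<Rightarrow> (real^'s::finite \<Rightarrow> real \<Rightarrow> real) \<Rightarrow> (real^'s) \<times> real \<Rightarrow> real" where
  "Phi1 L f z = (\<Sum>i\<in>L. PP [Some i] f z)"
definition Phi2 :: "'s set \<Rightarrow> (real^'s::finite \<Rightarrow> real \<Rightarrow> real) \<Rightarrow> (real^'s) \<times> real \<Rightarrow> real" where
  "Phi2 L f z = (\<Sum>i\<in>L. \<Sum>j\<in>L. PP [Some j, Some i] f z)"

lemma d_phi0:
  assumes "smooth_fun f"
  shows "((\<lambda>b. PP [] f (z + b *\<^sub>R wL L)) has_real_derivative Phi1 L f (z + b *\<^sub>R wL L)) (at b)"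
  unfolding Phi1_def by (rule line_L[OF assms])

lemma d_phi1:
  assumes "smooth_fun f"
  shows "((\<lambda>b. Phi1 L f (z + b *\<^sub>R wL L)) has_real_derivative Phi2 L f (z + b *\<^sub>R wL L)) (at b)"
  unfolding Phi1_def Phi2_def
  by (rule DERIV_sum) (rule line_L[OF assms])

lemma lip_Phi2:
  assumes "smooth_fun f"
  shows "\<exists>M. \<forall>\<^sub>F z in nhds 0. \<bar>Phi2 L f z - Phi2 L f 0\<bar> \<le> M * SC z"
proof -
  have "\<exists>M. \<forall>\<^sub>F z in nhds 0. \<bar>\<Sum>i\<in>L. \<Sum>j\<in>L. (PP [Some j, Some i] f z - PP [Some j, Some i] f 0)\<bar> \<le> M * SC z"
    by (rule ev_sum_bound, simp, rule ev_sum_bound, simp) (use lip_PP[OF assms] in auto)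
  then show ?thesis by (simp add: Phi2_def sum_subtractf)
qed

lemma second_Phi1:
  assumes "smooth_fun f"
  shows "\<exists>M. \<forall>\<^sub>F z in nhds 0. \<bar>Phi1 L f z - Phi1 L f 0 - (\<Sum>i\<in>L. \<Sum>v\<in>UNIV. crd v z * PP [v, Some i] f 0)\<bar> \<le> M * (SC z)^2"
proof -
  have "\<exists>M. \<forall>\<^sub>F z in nhds 0. \<bar>\<Sum>i\<in>L. (PP [Some i] f z - PP [Some i] f 0 - (\<Sum>v\<in>UNIV. crd v z * PP [v, Some i] f 0))\<bar> \<le> M * (SC z)^2"
    by (rule ev_sum_bound) (use second_PP[OF assms] in auto)
  then show ?thesis by (simp add: Phi1_def sum_subtractf)
qed


lemma PP_zero1: "PP [v] f 0 = pds [v] f 0 0" by (simp add: PP_def)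
lemma PP_zero2: "PP [u, v] f 0 = pds [u, v] f 0 0" by (simp add: PP_def)

lemma Phi1_zero: "Phi1 L f 0 = (\<Sum>i\<in>L. coef_a f i)"
  by (simp add: Phi1_def PP_def coef_a_def)

lemma Phi2_zero: "Phi2 L f 0 = 2 * (\<Sum>i\<in>L. \<Sum>j\<in>L. coef_ff f i j)"
proof -
  have "Phi2 L f 0 = (\<Sum>i\<in>L. \<Sum>j\<in>L. 2 * coef_ff f j i)"
    by (simp add: Phi2_def PP_def coef_ff_def)
  also have "\<dots> = 2 * (\<Sum>j\<in>L. \<Sum>i\<in>L. coef_ff f j i)"
    by (subst sum.swap) (simp add: sum_distrib_left)
  finally show ?thesis .
qed

definition zz :: "'s set \<Rightarrow> (real \<Rightarrow> real) \<Rightarrow> real \<Rightarrow> real \<Rightarrow> (real^'s::finite) \<times> real" where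
  "zz L X l b = ((\<chi> i. if i \<in> L then b else X l), l)"

lemma zz_line: "zz L X l b = zz L X l 0 + b *\<^sub>R wL L"
  by (simp add: zz_def wL_def vec_eq_iff)

lemma PP_zz: "PP [] f (zz L X l b) = f (\<chi> i. if i \<in> L then b else X l) l"
  by (simp add: PP_Nil zz_def)

lemma d_zz0:
  assumes "smooth_fun f"
  shows "((\<lambda>b. PP [] f (zz L X l b)) has_real_derivative Phi1 L f (zz L X l b)) (at b)"
  using d_phi0[OF assms, of "zz L X l 0" L b] by (simp add: zz_line[symmetric])

lemma d_zz1:
  assumes "smooth_fun f"
  shows "((\<lambda>b. Phi1 L f (zz L X l b)) has_real_derivative Phi2 L f (zz L X l b)) (at b)"
  using d_phi1[OF assms, of L "zz L X l 0" b] by (simp add: zz_line[symmetric])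

lemma SC_zz:
  fixes L :: "'s::finite set"
  shows "SC (zz L X l b) \<le> real CARD('s) * (\<bar>b\<bar> + \<bar>X l\<bar> + \<bar>l\<bar>)"
proof -
  have "SC (zz L X l b) = \<bar>l\<bar> + (\<Sum>i\<in>(UNIV::'s set). \<bar>if i \<in> L then b else X l\<bar>)"
    by (simp add: SC_def sum_UNIV_option crd_def zz_def)
  also have "\<dots> \<le> \<bar>l\<bar> + (\<Sum>i\<in>(UNIV::'s set). \<bar>b\<bar> + \<bar>X l\<bar>)"
    by (intro add_left_mono sum_mono) auto
  also have "\<dots> = \<bar>l\<bar> + real CARD('s) * (\<bar>b\<bar> + \<bar>X l\<bar>)" by simp
  also have "\<dots> \<le> real CARD('s) * (\<bar>b\<bar> + \<bar>X l\<bar> + \<bar>l\<bar>)"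
  proof -
    have "1 \<le> real CARD('s)" by simp
    then have "\<bar>l\<bar> \<le> real CARD('s) * \<bar>l\<bar>" by (simp add: mult_le_cancel_right1)
    then show ?thesis by (simp add: distrib_left)
  qed
  finally show ?thesis .
qed

lemma norm_zz: "norm (zz L X l b) \<le> SC (zz L X l b)"
  unfolding SC_def by (rule norm_le_crd)

lemma lin_term:
  assumes sm: "smooth_fun f"
  shows "(\<Sum>i\<in>L. \<Sum>v\<in>UNIV. crd v (zz L X l (X l)) * PP [v, Some i] f 0)
       = l * (\<Sum>i\<in>L. coef_fl f i) + 2 * X l * ((\<Sum>i\<in>L. \<Sum>j\<in>L. coef_ff f i j) + (\<Sum>i\<in>L. \<Sum>j\<in>-L. coef_ff f i j))"
proof -
  have sw: "pds [v, Some i] f 0 0 = pds [Some i, v] f 0 0" for v i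
    using smooth_swap[OF sm, of v "Some i" "[]" 0] by (simp add: PP_def)
  have sw1: "pds [None, Some i] f 0 0 = pds [Some i, None] f 0 0" for i using sw .
  have sw2: "(\<lambda>j. X l * pds [Some j, Some i] f 0 0) = (\<lambda>j. X l * pds [Some i, Some j] f 0 0)" for i
    by (intro ext) (metis sw)
  have "(\<Sum>i\<in>L. \<Sum>v\<in>UNIV. crd v (zz L X l (X l)) * PP [v, Some i] f 0)
      = (\<Sum>i\<in>L. l * pds [None, Some i] f 0 0 + (\<Sum>j\<in>UNIV. X l * pds [Some j, Some i] f 0 0))"
    unfolding sum_UNIV_option by (simp add: crd_def zz_def PP_def)
  also have "\<dots> = (\<Sum>i\<in>L. l * pds [Some i, None] f 0 0 + (\<Sum>j\<in>UNIV. X l * pds [Some i, Some j] f 0 0))"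
    by (simp only: sw1 sw2)
  also have "\<dots> = (\<Sum>i\<in>L. l * coef_fl f i + X l * (\<Sum>j\<in>UNIV. 2 * coef_ff f i j))"
    by (simp add: coef_fl_def coef_ff_def sum_distrib_left)
  also have "\<dots> = l * (\<Sum>i\<in>L. coef_fl f i) + 2 * X l * (\<Sum>i\<in>L. \<Sum>j\<in>UNIV. coef_ff f i j)"
    by (simp add: sum.distrib sum_distrib_left[symmetric] mult.assoc)
  also have "(\<Sum>i\<in>L. \<Sum>j\<in>UNIV. coef_ff f i j) = (\<Sum>i\<in>L. \<Sum>j\<in>L. coef_ff f i j) + (\<Sum>i\<in>L. \<Sum>j\<in>-L. coef_ff f i j)"
  proof -
    have "(\<Sum>j\<in>UNIV. coef_ff f i j) = (\<Sum>j\<in>L. coef_ff f i j) + (\<Sum>j\<in>-L. coef_ff f i j)" for i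
      using sum.union_disjoint[of L "-L" "coef_ff f i"] by simp
    then show ?thesis by (simp add: sum.distrib)
  qed
  finally show ?thesis .
qed


lemma sign_factor:
  fixes r k :: real
  assumes k: "0 < k" "k \<le> 1/2" and r: "\<bar>r\<bar> < k/2"
  shows "(1 - k) * (1 + r) - 1 < 0" "(1 + k) * (1 + r) - 1 > 0"
proof -
  have "k * \<bar>r\<bar> \<le> (1/2) * \<bar>r\<bar>" by (rule mult_right_mono) (use k in auto)
  then have kr: "\<bar>k * r\<bar> \<le> \<bar>r\<bar> / 2"
    using k by (simp add: abs_mult)
  have a1: "- \<bar>r\<bar> \<le> r" "r \<le> \<bar>r\<bar>" by auto
  have a2: "- \<bar>k * r\<bar> \<le> k * r" "k * r \<le> \<bar>k * r\<bar>" by auto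
  have e1: "(1 - k) * (1 + r) - 1 = - k + r - k * r" by (simp add: algebra_simps)
  have e2: "(1 + k) * (1 + r) - 1 = k + r + k * r" by (simp add: algebra_simps)
  show "(1 - k) * (1 + r) - 1 < 0" unfolding e1 using a1 a2 kr r by linarith
  show "(1 + k) * (1 + r) - 1 > 0" unfolding e2 using a1 a2 kr r by linarith
qed

lemma root_lemma:
  fixes phi p1 p2 :: "real \<Rightarrow> real"
  assumes d1: "\<And>t. (phi has_real_derivative p1 t) (at t)"
    and d2: "\<And>t. (p1 has_real_derivative p2 t) (at t)"
    and z: "phi x0 = 0" and s: "s = p1 x0" "s \<noteq> 0" and Q: "Q \<noteq> 0"
    and k: "0 < k" "k \<le> 1/2"
    and bnd: "\<And>\<xi>. \<bar>\<xi> - x0\<bar> \<le> 3/2 * \<bar>s\<bar> / \<bar>Q\<bar> \<Longrightarrow> \<bar>p2 \<xi> - 2 * Q\<bar> < \<bar>Q\<bar> * k"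
  shows "\<exists>t. 1 - k \<le> t \<and> t \<le> 1 + k \<and> phi (x0 - s * t / Q) = 0"
proof -
  define g where "g t = phi (x0 + (- s / Q) * t)" for t
  have lin: "((\<lambda>t. x0 + (- s / Q) * t) has_real_derivative (- s / Q)) (at t)" for t
    using Q by (auto intro!: derivative_eq_intros)
  have gd: "(g has_real_derivative p1 (x0 + (- s / Q) * t) * (- s / Q)) (at t)" for t
    unfolding g_def by (rule DERIV_chain2[OF d1 lin])
  have val: "\<exists>A. g t = (s^2 * t / Q) * A \<and> (t = 1 - k \<longrightarrow> A < 0) \<and> (t = 1 + k \<longrightarrow> A > 0)"
    if t: "t = 1 - k \<or> t = 1 + k" for t
  proof -
    define u where "u = - s * t / Q"
    have tpos: "0 < t" "t \<le> 3/2" using t k by auto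
    have ub: "\<bar>u\<bar> \<le> 3/2 * \<bar>s\<bar> / \<bar>Q\<bar>"
    proof -
      have "\<bar>u\<bar> = \<bar>s\<bar> * t / \<bar>Q\<bar>" using tpos by (simp add: u_def abs_mult abs_divide)
      also have "\<dots> \<le> \<bar>s\<bar> * (3/2) / \<bar>Q\<bar>"
        by (intro divide_right_mono mult_left_mono) (use tpos in auto)
      finally show ?thesis by simp
    qed
    have "\<exists>\<xi>. \<bar>\<xi> - x0\<bar> \<le> \<bar>(x0 + u) - x0\<bar> \<and>
      phi (x0 + u) = phi x0 + p1 x0 * ((x0 + u) - x0) + p2 \<xi> / 2 * ((x0 + u) - x0)^2"
      by (rule taylor2[OF d1 d2])
    then obtain \<xi> where \<xi>0: "\<bar>\<xi> - x0\<bar> \<le> \<bar>(x0 + u) - x0\<bar> \<and>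
      phi (x0 + u) = phi x0 + p1 x0 * ((x0 + u) - x0) + p2 \<xi> / 2 * ((x0 + u) - x0)^2" ..
    note \<xi> = conjunct1[OF \<xi>0] conjunct2[OF \<xi>0]
    define e where "e = p2 \<xi> - 2 * Q"
    have eb: "\<bar>e\<bar> < \<bar>Q\<bar> * k" unfolding e_def by (rule bnd) (use \<xi>(1) ub in simp)
    define r where "r = e / (2 * Q)"
    have rb: "\<bar>r\<bar> < k / 2"
    proof -
      have "\<bar>r\<bar> = \<bar>e\<bar> / (2 * \<bar>Q\<bar>)" by (simp add: r_def abs_divide abs_mult)
      also have "\<dots> < \<bar>Q\<bar> * k / (2 * \<bar>Q\<bar>)"
        by (rule divide_strict_right_mono[OF eb]) (use Q in simp)
      also have "\<dots> = k / 2" using Q by simp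
      finally show ?thesis .
    qed
    have gt: "g t = (s^2 * t / Q) * (t * (1 + r) - 1)"
    proof -
      have "g t = phi (x0 + u)" by (simp add: g_def u_def)
      also have "\<dots> = s * u + (e + 2 * Q) / 2 * u^2" using \<xi>(2) z s(1) by (simp add: e_def)
      also have "\<dots> = (s^2 * t / Q) * (t * (1 + r) - 1)"
        using Q by (simp add: u_def r_def field_simps power2_eq_square)
      finally show ?thesis .
    qed
    show ?thesis
      using gt sign_factor[OF k rb] by (intro exI[of _ "t * (1 + r) - 1"]) auto
  qed
  obtain A1 where A1: "g (1 - k) = (s^2 * (1 - k) / Q) * A1" "A1 < 0" using val[of "1 - k"] k by auto
  obtain A2 where A2: "g (1 + k) = (s^2 * (1 + k) / Q) * A2" "A2 > 0" using val[of "1 + k"] k by auto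
  have "g (1 - k) * g (1 + k) = ((s^2 * (1 - k) / Q) * (s^2 * (1 + k) / Q)) * (A1 * A2)"
    using A1 A2 by (simp add: mult_ac)
  also have "\<dots> \<le> 0"
  proof (rule mult_nonneg_nonpos)
    have "(s^2 * (1 - k) / Q) * (s^2 * (1 + k) / Q) = (s^2 * s^2 * ((1 - k) * (1 + k))) / (Q * Q)"
      by (simp add: field_simps)
    also have "\<dots> \<ge> 0"
    proof (rule divide_nonneg_nonneg)
      show "0 \<le> s^2 * s^2 * ((1 - k) * (1 + k))" using k by (intro mult_nonneg_nonneg) auto
      show "0 \<le> Q * Q" by simp
    qed
    finally show "(s^2 * (1 - k) / Q) * (s^2 * (1 + k) / Q) \<ge> 0" .
    show "A1 * A2 \<le> 0" using A1(2) A2(2) by (simp add: mult_neg_pos less_imp_le)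
  qed
  finally obtain t where "min (1 - k) (1 + k) \<le> t" "t \<le> max (1 - k) (1 + k)" "g t = 0"
    using ivt_sign[OF gd] by blast
  moreover have "x0 + (- s / Q) * t = x0 - s * t / Q" by simp
  ultimately show ?thesis using k by (intro exI[of _ t]) (auto simp: g_def)
qed


lemma x_bounds:
  fixes X :: "real \<Rightarrow> real"
  assumes "(\<lambda>l. X l - D * l - R * l^2) \<in> O[nhds 0](\<lambda>l. l^3)"
  shows "\<exists>\<eta>>0. \<eta> \<le> 1 \<and> (\<exists>CX\<ge>0. \<forall>l. \<bar>l\<bar> < \<eta> \<longrightarrow> \<bar>X l - D * l\<bar> \<le> CX * l^2)"
proof -
  obtain cX where cX: "cX > 0" "\<forall>\<^sub>F l in nhds 0. norm (X l - D * l - R * l^2) \<le> cX * norm (l^3)"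
    using assms by (elim landau_o.bigE) blast
  then obtain \<eta> where \<eta>: "\<eta> > 0" "\<And>l. dist l 0 < \<eta> \<Longrightarrow> \<bar>X l - D * l - R * l^2\<bar> \<le> cX * \<bar>l^3\<bar>"
    unfolding eventually_nhds_metric by auto
  define CX where "CX = \<bar>R\<bar> + cX"
  have "\<bar>X l - D * l\<bar> \<le> CX * l^2" if l: "\<bar>l\<bar> < min \<eta> 1" for l
  proof -
    have "\<bar>X l - D * l\<bar> \<le> \<bar>X l - D * l - R * l^2\<bar> + \<bar>R * l^2\<bar>" by linarith
    also have "\<dots> \<le> cX * \<bar>l^3\<bar> + \<bar>R\<bar> * l^2" using \<eta>(2)[of l] l by (simp add: abs_mult)
    also have "cX * \<bar>l^3\<bar> \<le> cX * l^2"
    proof -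
      have "\<bar>l^3\<bar> = \<bar>l\<bar> * l^2" by (simp add: abs_mult power3_eq_cube power2_eq_square)
      also have "\<dots> \<le> 1 * l^2" by (rule mult_right_mono) (use l in auto)
      finally show ?thesis using cX(1) by (simp add: mult_left_mono)
    qed
    finally show ?thesis by (simp add: CX_def distrib_right)
  qed
  moreover have "CX \<ge> 0" using cX(1) by (simp add: CX_def)
  ultimately show ?thesis using \<eta>(1) by (intro exI[of _ "min \<eta> 1"]) auto
qed

lemma phi2_bound:
  assumes sm: "smooth_fun f"
  shows "\<exists>\<rho>>0. \<exists>M\<ge>0. \<forall>z. norm z < \<rho> \<longrightarrow> \<bar>Phi2 L f z - Phi2 L f 0\<bar> \<le> M * SC z"
proof -
  obtain M where M: "\<forall>\<^sub>F z in nhds 0. \<bar>Phi2 L f z - Phi2 L f 0\<bar> \<le> M * SC z"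
    using lip_Phi2[OF sm] by blast
  then obtain \<rho> where \<rho>: "\<rho> > 0" "\<And>z. dist z 0 < \<rho> \<Longrightarrow> \<bar>Phi2 L f z - Phi2 L f 0\<bar> \<le> M * SC z"
    unfolding eventually_nhds_metric by blast
  have "\<bar>Phi2 L f z - Phi2 L f 0\<bar> \<le> \<bar>M\<bar> * SC z" if "norm z < \<rho>" for z
  proof -
    have "\<bar>Phi2 L f z - Phi2 L f 0\<bar> \<le> M * SC z" using \<rho>(2)[of z] that by simp
    also have "\<dots> \<le> \<bar>M\<bar> * SC z" by (rule mult_right_mono) (auto simp: SC_nonneg)
    finally show ?thesis .
  qed
  then show ?thesis using \<rho>(1) by (intro exI[of _ \<rho>] conjI exI[of _ "\<bar>M\<bar>"]) auto
qed

lemma phi1_bound: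
  assumes sm: "smooth_fun f"
  shows "\<exists>\<rho>>0. \<exists>M\<ge>0. \<forall>z. norm z < \<rho> \<longrightarrow>
     \<bar>Phi1 L f z - Phi1 L f 0 - (\<Sum>i\<in>L. \<Sum>v\<in>UNIV. crd v z * PP [v, Some i] f 0)\<bar> \<le> M * (SC z)^2"
proof -
  obtain M where M: "\<forall>\<^sub>F z in nhds 0. \<bar>Phi1 L f z - Phi1 L f 0 - (\<Sum>i\<in>L. \<Sum>v\<in>UNIV. crd v z * PP [v, Some i] f 0)\<bar> \<le> M * (SC z)^2"
    using second_Phi1[OF sm] by blast
  then obtain \<rho> where \<rho>: "\<rho> > 0" "\<And>z. dist z 0 < \<rho> \<Longrightarrow>
     \<bar>Phi1 L f z - Phi1 L f 0 - (\<Sum>i\<in>L. \<Sum>v\<in>UNIV. crd v z * PP [v, Some i] f 0)\<bar> \<le> M * (SC z)^2"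
    unfolding eventually_nhds_metric by blast
  have "\<bar>Phi1 L f z - Phi1 L f 0 - (\<Sum>i\<in>L. \<Sum>v\<in>UNIV. crd v z * PP [v, Some i] f 0)\<bar> \<le> \<bar>M\<bar> * (SC z)^2"
    if "norm z < \<rho>" for z
  proof -
    have "\<bar>Phi1 L f z - Phi1 L f 0 - (\<Sum>i\<in>L. \<Sum>v\<in>UNIV. crd v z * PP [v, Some i] f 0)\<bar> \<le> M * (SC z)^2"
      using \<rho>(2)[of z] that by simp
    also have "\<dots> \<le> \<bar>M\<bar> * (SC z)^2" by (rule mult_right_mono) auto
    finally show ?thesis .
  qed
  then show ?thesis using \<rho>(1) by (intro exI[of _ \<rho>] conjI exI[of _ "\<bar>M\<bar>"]) auto
qed


lemma main_analytic:
  fixes f :: "real^'s::finite \<Rightarrow> real \<Rightarrow> real" and L :: "'s set" and X :: "real \<Rightarrow> real"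
  defines "Q \<equiv> \<Sum>i\<in>L. \<Sum>j\<in>L. coef_ff f i j"
    and "S \<equiv> \<Sum>i\<in>L. \<Sum>j\<in>-L. coef_ff f i j"
    and "Sfl \<equiv> \<Sum>i\<in>L. coef_fl f i"
    and "D \<equiv> coef_D f"
  defines "c \<equiv> 2 * D * (Q + S) + Sfl"
  assumes sm: "smooth_fun f"
    and crit: "(\<Sum>i\<in>L. coef_a f i) = 0"
    and Qne: "Q \<noteq> 0" and cne: "c \<noteq> 0"
    and Xz: "\<exists>\<eta>>0. \<forall>l. \<bar>l\<bar> < \<eta> \<longrightarrow> f (\<chi> i. X l) l = 0"
    and Xe: "(\<lambda>l. X l - coef_D f * l - coef_R f * l^2) \<in> O[nhds 0](\<lambda>l. l^3)"
  shows "\<exists>\<epsilon>>0. \<exists>\<delta>>0. \<exists>xplus xminus :: real \<Rightarrow> real.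
     (\<forall>l. \<bar>l\<bar> < \<epsilon> \<longrightarrow> xplus l = X l \<and> \<bar>xplus l\<bar> < \<delta> \<and> \<bar>xminus l\<bar> < \<delta> \<and> (l \<noteq> 0 \<longrightarrow> xplus l \<noteq> xminus l) \<and>
        (\<forall>xp. \<bar>xp\<bar> < \<delta> \<longrightarrow> (f (\<chi> i. if i \<in> L then xp else X l) l = 0 \<longleftrightarrow> xp = xplus l \<or> xp = xminus l))) \<and>
     (\<lambda>l. xplus l - D * l) \<in> O[nhds 0](\<lambda>l. l^2) \<and>
     (\<lambda>l. xminus l - (D - c / Q) * l) \<in> O[nhds 0](\<lambda>l. l^2)"
proof -
  define n where "n = real CARD('s)"
  have n1: "n \<ge> 1" by (simp add: n_def)
  have Qp: "\<bar>Q\<bar> > 0" using Qne by simp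
  have cp: "\<bar>c\<bar> > 0" using cne by simp
  obtain \<eta>0 where \<eta>0: "\<eta>0 > 0" "\<And>l. \<bar>l\<bar> < \<eta>0 \<Longrightarrow> f (\<chi> i. X l) l = 0" using Xz by blast
  obtain \<eta>1 CX where \<eta>1: "\<eta>1 > 0" "\<eta>1 \<le> 1" "CX \<ge> 0" "\<And>l. \<bar>l\<bar> < \<eta>1 \<Longrightarrow> \<bar>X l - D * l\<bar> \<le> CX * l^2"
    using x_bounds[OF Xe[folded D_def]] by blast
  define A where "A = \<bar>D\<bar> + CX"
  have A0: "A \<ge> 0" using \<eta>1(3) by (simp add: A_def)
  have XA: "\<bar>X l\<bar> \<le> A * \<bar>l\<bar>" if l: "\<bar>l\<bar> < \<eta>1" for l
  proof -
    have "\<bar>X l\<bar> \<le> \<bar>X l - D * l\<bar> + \<bar>D * l\<bar>" by linarith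
    also have "\<dots> \<le> CX * l^2 + \<bar>D\<bar> * \<bar>l\<bar>" using \<eta>1(4)[OF l] by (simp add: abs_mult)
    also have "CX * l^2 \<le> CX * \<bar>l\<bar>"
    proof -
      have "l^2 = \<bar>l\<bar> * \<bar>l\<bar>" by (simp add: power2_eq_square abs_mult[symmetric])
      also have "\<dots> \<le> \<bar>l\<bar> * 1" by (rule mult_left_mono) (use l \<eta>1(2) in auto)
      finally show ?thesis using \<eta>1(3) by (simp add: mult_left_mono)
    qed
    finally show ?thesis by (simp add: A_def distrib_right)
  qed
  obtain \<rho>1 M1 where P2: "\<rho>1 > 0" "M1 \<ge> 0" "\<And>z. norm z < \<rho>1 \<Longrightarrow> \<bar>Phi2 L f z - Phi2 L f 0\<bar> \<le> M1 * SC z"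
    using phi2_bound[OF sm, of L] by blast
  have P2': "\<bar>Phi2 L f z - 2 * Q\<bar> \<le> M1 * SC z" if "norm z < \<rho>1" for z
    using P2(3)[OF that] by (simp add: Phi2_zero Q_def)
  obtain \<rho>2 M2 where P3: "\<rho>2 > 0" "M2 \<ge> 0" "\<And>z. norm z < \<rho>2 \<Longrightarrow>
     \<bar>Phi1 L f z - Phi1 L f 0 - (\<Sum>i\<in>L. \<Sum>v\<in>UNIV. crd v z * PP [v, Some i] f 0)\<bar> \<le> M2 * (SC z)^2"
    using phi1_bound[OF sm, of L] by blast
  have Phi10: "Phi1 L f 0 = 0" using crit by (simp add: Phi1_zero)
  define \<rho> where "\<rho> = min \<rho>1 \<rho>2"
  have \<rho>0: "\<rho> > 0" using P2(1) P3(1) by (simp add: \<rho>_def)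
  define \<delta> where "\<delta> = min (\<rho> / (3 * n)) (\<bar>Q\<bar> / (3 * n * (M1 + 1)))"
  have \<delta>0: "\<delta> > 0" using \<rho>0 n1 Qp P2(2) by (simp add: \<delta>_def)
  have Pd: "norm (zz L X l b) < \<rho>1 \<and> norm (zz L X l b) < \<rho>2 \<and> M1 * SC (zz L X l b) < \<bar>Q\<bar>"
    if b: "\<bar>b\<bar> < \<delta>" "\<bar>X l\<bar> < \<delta>" "\<bar>l\<bar> < \<delta>" for b l
  proof -
    have sc: "SC (zz L X l b) \<le> n * (\<bar>b\<bar> + \<bar>X l\<bar> + \<bar>l\<bar>)" unfolding n_def by (rule SC_zz)
    have "n * (\<bar>b\<bar> + \<bar>X l\<bar> + \<bar>l\<bar>) < n * (3 * \<delta>)"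
      by (rule mult_strict_left_mono) (use b n1 in auto)
    with sc have sc3: "SC (zz L X l b) < n * (3 * \<delta>)" by linarith
    have d1: "n * (3 * \<delta>) \<le> \<rho>"
    proof -
      have "\<delta> \<le> \<rho> / (3 * n)" by (simp add: \<delta>_def)
      then show ?thesis using n1 by (simp add: field_simps)
    qed
    have d2: "n * (3 * \<delta>) \<le> \<bar>Q\<bar> / (M1 + 1)"
    proof -
      have pos: "3 * n * (M1 + 1) > 0" using n1 P2(2) by simp
      have "\<delta> \<le> \<bar>Q\<bar> / (3 * n * (M1 + 1))" by (simp add: \<delta>_def)
      then have "\<delta> * (3 * n * (M1 + 1)) \<le> \<bar>Q\<bar>" using pos_le_divide_eq[OF pos] by blast
      then have "n * (3 * \<delta>) * (M1 + 1) \<le> \<bar>Q\<bar>" by (simp add: mult_ac)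
      then show ?thesis using P2(2) by (simp add: pos_le_divide_eq)
    qed
    have nz: "norm (zz L X l b) < \<rho>" using norm_zz[of L X l b] sc3 d1 by linarith
    have "M1 * SC (zz L X l b) \<le> M1 * (\<bar>Q\<bar> / (M1 + 1))"
      by (rule mult_left_mono) (use sc3 d2 P2(2) in auto)
    also have "\<dots> < \<bar>Q\<bar>"
    proof -
      have "M1 * (\<bar>Q\<bar> / (M1 + 1)) = \<bar>Q\<bar> * (M1 / (M1 + 1))" by simp
      also have "\<dots> < \<bar>Q\<bar> * 1"
        by (rule mult_strict_left_mono) (use Qp P2(2) in auto)
      finally show ?thesis by simp
    qed
    finally show ?thesis using nz by (simp add: \<rho>_def)
  qed
  have Phi2_nz: "Phi2 L f (zz L X l b) \<noteq> 0" if "\<bar>b\<bar> < \<delta>" "\<bar>X l\<bar> < \<delta>" "\<bar>l\<bar> < \<delta>" for b l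
  proof
    assume "Phi2 L f (zz L X l b) = 0"
    then have "\<bar>2 * Q\<bar> \<le> M1 * SC (zz L X l b)" using P2'[of "zz L X l b"] Pd[OF that] by simp
    moreover have "\<bar>2 * Q\<bar> = 2 * \<bar>Q\<bar>" by (simp add: abs_mult)
    ultimately show False using Pd[OF that] Qp by linarith
  qed
  define Ce where "Ce = M1 * n * (2 * A + 9/4 * \<bar>c\<bar> / \<bar>Q\<bar> + 1)"
  define Cs where "Cs = 2 * \<bar>Q + S\<bar> * CX + M2 * (n * (2 * A + 1))^2"
  define Cm where "Cm = CX + (Cs + 3/2 * \<bar>c\<bar> * (Ce + 1) / \<bar>Q\<bar>) / \<bar>Q\<bar>"
  have Ce0: "Ce \<ge> 0" using P2(2) n1 A0 by (simp add: Ce_def)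
  have Cs0: "Cs \<ge> 0" using P3(2) \<eta>1(3) by (simp add: Cs_def)
  have Cm0: "Cm \<ge> 0" using Ce0 Cs0 \<eta>1(3) by (simp add: Cm_def)
  define \<epsilon> where "\<epsilon> = min (min \<eta>0 \<eta>1) (min (\<delta> / (2 * (A + 1))) (min (\<bar>c\<bar> / (2 * (Cs + 1)))
            (min (\<delta> * \<bar>Q\<bar> / (5 * (\<bar>c\<bar> + 1))) (\<bar>Q\<bar> / (2 * (Ce + 1))))))"
  have \<epsilon>0: "\<epsilon> > 0" using \<eta>0(1) \<eta>1(1) \<delta>0 A0 cp Cs0 Qp Ce0 by (simp add: \<epsilon>_def)
  have le1: "\<bar>l\<bar> < \<eta>0" "\<bar>l\<bar> < \<eta>1" "\<bar>l\<bar> < 1" if "\<bar>l\<bar> < \<epsilon>" for l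
    using that \<eta>1(2) by (auto simp: \<epsilon>_def)
  have le2: "\<bar>l\<bar> < \<delta>" "A * \<bar>l\<bar> < \<delta> / 2" if "\<bar>l\<bar> < \<epsilon>" for l
  proof -
    have l: "\<bar>l\<bar> < \<delta> / (2 * (A + 1))" using that by (simp add: \<epsilon>_def)
    then have l': "\<bar>l\<bar> * (2 * (A + 1)) < \<delta>" using A0 by (simp add: pos_less_divide_eq)
    have "\<bar>l\<bar> * 2 \<le> \<bar>l\<bar> * (2 * (A + 1))" using A0 by (intro mult_left_mono) auto
    then show "\<bar>l\<bar> < \<delta>" using l' by linarith
    have "A * \<bar>l\<bar> * 2 \<le> \<bar>l\<bar> * (2 * (A + 1))" by (simp add: algebra_simps)
    then show "A * \<bar>l\<bar> < \<delta> / 2" using l' by linarith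
  qed
  have le3: "Cs * \<bar>l\<bar> \<le> \<bar>c\<bar> / 2" if "\<bar>l\<bar> < \<epsilon>" for l
  proof -
    have l: "\<bar>l\<bar> < \<bar>c\<bar> / (2 * (Cs + 1))" using that by (simp add: \<epsilon>_def)
    then have l': "\<bar>l\<bar> * (2 * (Cs + 1)) < \<bar>c\<bar>" using Cs0 by (simp add: pos_less_divide_eq)
    have "Cs * \<bar>l\<bar> * 2 \<le> \<bar>l\<bar> * (2 * (Cs + 1))" by (simp add: algebra_simps)
    then show ?thesis using l' by linarith
  qed
  have le4: "9/4 * \<bar>c\<bar> * \<bar>l\<bar> / \<bar>Q\<bar> < \<delta> / 2" if "\<bar>l\<bar> < \<epsilon>" for l
  proof -
    have l: "\<bar>l\<bar> < \<delta> * \<bar>Q\<bar> / (5 * (\<bar>c\<bar> + 1))" using that by (simp add: \<epsilon>_def)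
    then have l': "\<bar>l\<bar> * (5 * (\<bar>c\<bar> + 1)) < \<delta> * \<bar>Q\<bar>" by (simp add: pos_less_divide_eq)
    have "9/4 * \<bar>c\<bar> * \<bar>l\<bar> * 2 \<le> \<bar>l\<bar> * (5 * (\<bar>c\<bar> + 1))"
    proof -
      have "9/2 * \<bar>c\<bar> \<le> 5 * (\<bar>c\<bar> + 1)" by simp
      then have "\<bar>l\<bar> * (9/2 * \<bar>c\<bar>) \<le> \<bar>l\<bar> * (5 * (\<bar>c\<bar> + 1))" by (rule mult_left_mono) simp
      then show ?thesis by (simp add: algebra_simps)
    qed
    then have "9/4 * \<bar>c\<bar> * \<bar>l\<bar> * 2 < \<delta> * \<bar>Q\<bar>" using l' by linarith
    then show ?thesis using Qp by (simp add: field_simps)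
  qed
  have le5: "(Ce + 1) * \<bar>l\<bar> \<le> \<bar>Q\<bar> / 2" if "\<bar>l\<bar> < \<epsilon>" for l
  proof -
    have l: "\<bar>l\<bar> < \<bar>Q\<bar> / (2 * (Ce + 1))" using that by (simp add: \<epsilon>_def)
    then have "\<bar>l\<bar> * (2 * (Ce + 1)) < \<bar>Q\<bar>" using Ce0 by (simp add: pos_less_divide_eq)
    then show ?thesis by (simp add: algebra_simps)
  qed
  have Xfacts: "\<bar>X l - D * l\<bar> \<le> CX * l^2 \<and> \<bar>X l\<bar> \<le> A * \<bar>l\<bar> \<and> \<bar>X l\<bar> < \<delta> / 2 \<and> PP [] f (zz L X l (X l)) = 0"
    if l: "\<bar>l\<bar> < \<epsilon>" for l
  proof -
    have "(\<chi> i. if i \<in> L then X l else X l) = (\<chi> i. X l)" by simp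
    then have "PP [] f (zz L X l (X l)) = 0" using \<eta>0(2)[OF le1(1)[OF l]] by (simp add: PP_zz)
    then show ?thesis using \<eta>1(4)[OF le1(2)[OF l]] XA[OF le1(2)[OF l]] le2(2)[OF l] by linarith
  qed
  define s where "s l = Phi1 L f (zz L X l (X l))" for l
  have s_est: "\<bar>s l - c * l\<bar> \<le> Cs * l^2" if l: "\<bar>l\<bar> < \<epsilon>" for l
  proof -
    note XF = Xfacts[OF l]
    have Xd: "\<bar>X l\<bar> < \<delta>" using XF \<delta>0 by linarith
    have sc: "SC (zz L X l (X l)) \<le> n * (2 * A + 1) * \<bar>l\<bar>"
    proof -
      have "SC (zz L X l (X l)) \<le> n * (\<bar>X l\<bar> + \<bar>X l\<bar> + \<bar>l\<bar>)" unfolding n_def by (rule SC_zz)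
      also have "\<dots> \<le> n * (A * \<bar>l\<bar> + A * \<bar>l\<bar> + \<bar>l\<bar>)" using XF n1 by (intro mult_left_mono) auto
      finally show ?thesis by (simp add: algebra_simps)
    qed
    have sc2: "(SC (zz L X l (X l)))^2 \<le> (n * (2 * A + 1))^2 * l^2"
    proof -
      have "(SC (zz L X l (X l)))^2 \<le> (n * (2 * A + 1) * \<bar>l\<bar>)^2"
        by (rule power_mono[OF sc SC_nonneg])
      then show ?thesis by (simp add: power_mult_distrib)
    qed
    have nz: "norm (zz L X l (X l)) < \<rho>2" using Pd[OF Xd Xd le2(1)[OF l]] by blast
    have e1: "\<bar>s l - (l * Sfl + 2 * X l * (Q + S))\<bar> \<le> M2 * (SC (zz L X l (X l)))^2"
      using P3(3)[OF nz] lin_term[OF sm, of L X l] Phi10 by (simp add: s_def Q_def S_def Sfl_def)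
    also have "\<dots> \<le> M2 * ((n * (2 * A + 1))^2 * l^2)" by (rule mult_left_mono[OF sc2 P3(2)])
    finally have e1': "\<bar>s l - (l * Sfl + 2 * X l * (Q + S))\<bar> \<le> M2 * (n * (2 * A + 1))^2 * l^2" by simp
    have "(l * Sfl + 2 * X l * (Q + S)) - c * l = 2 * (Q + S) * (X l - D * l)"
      by (simp add: c_def algebra_simps)
    then have "\<bar>(l * Sfl + 2 * X l * (Q + S)) - c * l\<bar> = \<bar>2 * (Q + S) * (X l - D * l)\<bar>" by (rule arg_cong)
    also have "\<dots> = 2 * \<bar>Q + S\<bar> * \<bar>X l - D * l\<bar>" by (simp only: abs_mult)
    also have "\<dots> \<le> 2 * \<bar>Q + S\<bar> * (CX * l^2)" using XF by (intro mult_left_mono) auto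
    finally have e2: "\<bar>(l * Sfl + 2 * X l * (Q + S)) - c * l\<bar> \<le> 2 * \<bar>Q + S\<bar> * CX * l^2" by simp
    show ?thesis using e1' e2 by (simp add: Cs_def algebra_simps)
  qed
  have dd0: "\<And>b. ((\<lambda>b. PP [] f (zz L X l b)) has_real_derivative Phi1 L f (zz L X l b)) (at b)" for l
    by (rule d_zz0[OF sm])
  have dd1: "\<And>b. ((\<lambda>b. Phi1 L f (zz L X l b)) has_real_derivative Phi2 L f (zz L X l b)) (at b)" for l
    by (rule d_zz1[OF sm])
  have branch: "\<exists>xm. \<bar>l\<bar> < \<epsilon> \<longrightarrow> (\<bar>xm\<bar> < \<delta> \<and> PP [] f (zz L X l xm) = 0 \<and> (l \<noteq> 0 \<longrightarrow> xm \<noteq> X l)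
       \<and> \<bar>xm - (D - c / Q) * l\<bar> \<le> Cm * l^2)" for l
  proof (cases "\<bar>l\<bar> < \<epsilon> \<and> l \<noteq> 0")
    case False
    show ?thesis
    proof (cases "\<bar>l\<bar> < \<epsilon>")
      case True
      with False have l0: "l = 0" by simp
      note XF = Xfacts[OF True]
      have "X l = 0" using XF l0 by simp
      then show ?thesis using XF l0 \<delta>0 by (intro exI[of _ "X l"]) simp
    qed simp
  next
    case True
    then have l: "\<bar>l\<bar> < \<epsilon>" and l0: "l \<noteq> 0" by auto
    note XF = Xfacts[OF l]
    have lp: "\<bar>l\<bar> > 0" using l0 by simp
    have se: "\<bar>s l - c * l\<bar> \<le> \<bar>c\<bar> * \<bar>l\<bar> / 2"
    proof -
      have "Cs * l^2 = (Cs * \<bar>l\<bar>) * \<bar>l\<bar>" by (simp add: power2_eq_square abs_mult[symmetric] mult.assoc)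
      also have "\<dots> \<le> (\<bar>c\<bar> / 2) * \<bar>l\<bar>" by (rule mult_right_mono[OF le3[OF l]]) simp
      finally show ?thesis using s_est[OF l] by simp
    qed
    have cl: "\<bar>c * l\<bar> = \<bar>c\<bar> * \<bar>l\<bar>" by (simp add: abs_mult)
    have s_up: "\<bar>s l\<bar> \<le> 3/2 * \<bar>c\<bar> * \<bar>l\<bar>" using se cl by linarith
    have s_lo: "\<bar>s l\<bar> \<ge> \<bar>c\<bar> * \<bar>l\<bar> / 2" using se cl by linarith
    have s0: "s l \<noteq> 0"
    proof -
      have "\<bar>c\<bar> * \<bar>l\<bar> > 0" using cp lp by simp
      then show ?thesis using s_lo by auto
    qed
    define k where "k = (Ce + 1) * \<bar>l\<bar> / \<bar>Q\<bar>"
    have k0: "0 < k" using Ce0 lp Qp by (simp add: k_def)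
    have k1: "k \<le> 1/2" using le5[OF l] Qp by (simp add: k_def field_simps)
    have bnd: "\<bar>Phi2 L f (zz L X l \<xi>) - 2 * Q\<bar> < \<bar>Q\<bar> * k" if xi: "\<bar>\<xi> - X l\<bar> \<le> 3/2 * \<bar>s l\<bar> / \<bar>Q\<bar>" for \<xi>
    proof -
      have "3/2 * \<bar>s l\<bar> / \<bar>Q\<bar> \<le> 3/2 * (3/2 * \<bar>c\<bar> * \<bar>l\<bar>) / \<bar>Q\<bar>"
        using s_up Qp by (intro divide_right_mono mult_left_mono) auto
      also have "\<dots> = 9/4 * \<bar>c\<bar> * \<bar>l\<bar> / \<bar>Q\<bar>" by simp
      finally have xi2: "\<bar>\<xi> - X l\<bar> \<le> 9/4 * \<bar>c\<bar> * \<bar>l\<bar> / \<bar>Q\<bar>" using xi by linarith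
      have xid: "\<bar>\<xi>\<bar> < \<delta>" using xi2 le4[OF l] XF by linarith
      have Xd: "\<bar>X l\<bar> < \<delta>" using XF \<delta>0 by linarith
      note PD = Pd[OF xid Xd le2(1)[OF l]]
      have "\<bar>Phi2 L f (zz L X l \<xi>) - 2 * Q\<bar> \<le> M1 * SC (zz L X l \<xi>)" using P2' PD by blast
      also have "\<dots> \<le> M1 * (n * (\<bar>\<xi>\<bar> + \<bar>X l\<bar> + \<bar>l\<bar>))"
        unfolding n_def by (rule mult_left_mono[OF SC_zz P2(2)])
      also have "\<dots> \<le> M1 * (n * ((2 * A + 9/4 * \<bar>c\<bar> / \<bar>Q\<bar> + 1) * \<bar>l\<bar>))"
      proof -
        have "\<bar>\<xi>\<bar> + \<bar>X l\<bar> + \<bar>l\<bar> \<le> (2 * A + 9/4 * \<bar>c\<bar> / \<bar>Q\<bar> + 1) * \<bar>l\<bar>"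
          using xi2 XF by (simp add: algebra_simps) linarith
        then show ?thesis using n1 P2(2) by (intro mult_left_mono) auto
      qed
      also have "\<dots> = Ce * \<bar>l\<bar>" by (simp add: Ce_def mult_ac)
      also have "\<dots> < (Ce + 1) * \<bar>l\<bar>" using lp by simp
      also have "\<dots> = \<bar>Q\<bar> * k" using Qp by (simp add: k_def)
      finally show ?thesis .
    qed
    have z0: "PP [] f (zz L X l (X l)) = 0" using XF by blast
    have "\<exists>t. 1 - k \<le> t \<and> t \<le> 1 + k \<and> PP [] f (zz L X l (X l - s l * t / Q)) = 0"
      by (rule root_lemma[OF dd0[of l] dd1[of l] z0 s_def[of l] s0 Qne k0 k1 bnd])
    then obtain t where t: "1 - k \<le> t" "t \<le> 1 + k" "PP [] f (zz L X l (X l - s l * t / Q)) = 0"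
      by blast
    define xm where "xm = X l - s l * t / Q"
    have t0: "t > 0" "t \<le> 3/2" using t k0 k1 by auto
    have u_abs: "\<bar>s l * t / Q\<bar> = \<bar>s l\<bar> * t / \<bar>Q\<bar>" using t0 by (simp add: abs_mult abs_divide)
    have u_bd: "\<bar>s l\<bar> * t / \<bar>Q\<bar> \<le> 9/4 * \<bar>c\<bar> * \<bar>l\<bar> / \<bar>Q\<bar>"
    proof -
      have "\<bar>s l\<bar> * t \<le> (3/2 * \<bar>c\<bar> * \<bar>l\<bar>) * (3/2)" using s_up t0 by (intro mult_mono) auto
      then have h: "\<bar>s l\<bar> * t \<le> 9/4 * \<bar>c\<bar> * \<bar>l\<bar>" by simp
      show ?thesis by (rule divide_right_mono[OF h]) simp
    qed
    have xm_d: "\<bar>xm\<bar> < \<delta>" using u_abs u_bd le4[OF l] XF unfolding xm_def by linarith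
    have xm_ne: "xm \<noteq> X l" using s0 t0 Qne by (simp add: xm_def)
    have xm_est: "\<bar>xm - (D - c / Q) * l\<bar> \<le> Cm * l^2"
    proof -
      have eq: "xm - (D - c / Q) * l = (X l - D * l) + ((c * l - s l) + s l * (1 - t)) / Q"
        using Qne by (simp add: xm_def field_simps)
      have a: "\<bar>c * l - s l\<bar> \<le> Cs * l^2" using s_est[OF l] by linarith
      have b: "\<bar>s l * (1 - t)\<bar> \<le> 3/2 * \<bar>c\<bar> * (Ce + 1) / \<bar>Q\<bar> * l^2"
      proof -
        have "\<bar>1 - t\<bar> \<le> k" using t by linarith
        then have "\<bar>s l * (1 - t)\<bar> \<le> (3/2 * \<bar>c\<bar> * \<bar>l\<bar>) * k"
          unfolding abs_mult using s_up k0 by (intro mult_mono) auto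
        also have "\<dots> = 3/2 * \<bar>c\<bar> * (Ce + 1) / \<bar>Q\<bar> * (\<bar>l\<bar> * \<bar>l\<bar>)"
        proof -
          have gen: "(3/2 * \<bar>c\<bar> * a) * ((Ce + 1) * a / \<bar>Q\<bar>) = 3/2 * \<bar>c\<bar> * (Ce + 1) / \<bar>Q\<bar> * (a * a)" for a :: real
            by (simp add: field_simps)
          show ?thesis unfolding k_def by (rule gen)
        qed
        also have "\<bar>l\<bar> * \<bar>l\<bar> = l^2" by (simp add: power2_eq_square)
        finally show ?thesis .
      qed
      have "\<bar>((c * l - s l) + s l * (1 - t)) / Q\<bar> \<le> (Cs * l^2 + 3/2 * \<bar>c\<bar> * (Ce + 1) / \<bar>Q\<bar> * l^2) / \<bar>Q\<bar>"
      proof -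
        have "\<bar>(c * l - s l) + s l * (1 - t)\<bar> \<le> Cs * l^2 + 3/2 * \<bar>c\<bar> * (Ce + 1) / \<bar>Q\<bar> * l^2"
          using a b by linarith
        then show ?thesis by (simp add: abs_divide divide_right_mono)
      qed
      also have "\<dots> = (Cs + 3/2 * \<bar>c\<bar> * (Ce + 1) / \<bar>Q\<bar>) / \<bar>Q\<bar> * l^2" by (simp add: field_simps)
      finally have fin: "\<bar>((c * l - s l) + s l * (1 - t)) / Q\<bar> \<le> (Cs + 3/2 * \<bar>c\<bar> * (Ce + 1) / \<bar>Q\<bar>) / \<bar>Q\<bar> * l^2" .
      have "\<bar>xm - (D - c / Q) * l\<bar> = \<bar>(X l - D * l) + ((c * l - s l) + s l * (1 - t)) / Q\<bar>"
        by (simp only: eq)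
      also have "\<dots> \<le> \<bar>X l - D * l\<bar> + \<bar>((c * l - s l) + s l * (1 - t)) / Q\<bar>"
        by (rule abs_triangle_ineq)
      also have "\<dots> \<le> CX * l^2 + (Cs + 3/2 * \<bar>c\<bar> * (Ce + 1) / \<bar>Q\<bar>) / \<bar>Q\<bar> * l^2"
        using XF fin by linarith
      also have "\<dots> = Cm * l^2" by (simp add: Cm_def distrib_right)
      finally show ?thesis .
    qed
    show ?thesis using xm_d t(3) xm_ne xm_est by (intro exI[of _ xm]) (simp add: xm_def)
  qed
  have "\<forall>l. \<exists>xm. \<bar>l\<bar> < \<epsilon> \<longrightarrow> (\<bar>xm\<bar> < \<delta> \<and> PP [] f (zz L X l xm) = 0 \<and> (l \<noteq> 0 \<longrightarrow> xm \<noteq> X l)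
       \<and> \<bar>xm - (D - c / Q) * l\<bar> \<le> Cm * l^2)" using branch by blast
  then obtain xminus where xmin: "\<And>l. \<bar>l\<bar> < \<epsilon> \<Longrightarrow> \<bar>xminus l\<bar> < \<delta> \<and> PP [] f (zz L X l (xminus l)) = 0 \<and>
       (l \<noteq> 0 \<longrightarrow> xminus l \<noteq> X l) \<and> \<bar>xminus l - (D - c / Q) * l\<bar> \<le> Cm * l^2"
    by metis
  have uniq: "xp = X l \<or> xp = xminus l"
    if l: "\<bar>l\<bar> < \<epsilon>" and xp: "\<bar>xp\<bar> < \<delta>" and z: "PP [] f (zz L X l xp) = 0" for l xp
  proof (cases "l = 0")
    case False
    note XF = Xfacts[OF l]
    have Xd: "\<bar>X l\<bar> < \<delta>" using XF \<delta>0 by linarith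
    show ?thesis
    proof (rule ccontr)
      assume ne: "\<not> (xp = X l \<or> xp = xminus l)"
      have nz: "Phi2 L f (zz L X l t) \<noteq> 0" if "\<bar>t\<bar> < \<delta>" for t
        by (rule Phi2_nz[OF that Xd le2(1)[OF l]])
      show False
        by (rule at_most_two_zeros[OF dd0[of l] dd1[of l] nz xp Xd conjunct1[OF xmin[OF l]] z])
           (use XF xmin[OF l] ne False in auto)
    qed
  next
    case True
    note XF = Xfacts[OF l]
    have X0: "X l = 0" using XF True by simp
    have zz0: "zz L X l 0 = 0" using X0 True by (simp add: zz_def vec_eq_iff zero_prod_def)
    have "\<exists>\<xi>. \<bar>\<xi> - 0\<bar> \<le> \<bar>xp - 0\<bar> \<and> PP [] f (zz L X l xp) = PP [] f (zz L X l 0) + Phi1 L f (zz L X l 0) * (xp - 0)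
         + Phi2 L f (zz L X l \<xi>) / 2 * (xp - 0)^2"
      by (rule taylor2[OF dd0[of l] dd1[of l]])
    then obtain \<xi> where \<xi>0: "\<bar>\<xi> - 0\<bar> \<le> \<bar>xp - 0\<bar> \<and> PP [] f (zz L X l xp) = PP [] f (zz L X l 0) + Phi1 L f (zz L X l 0) * (xp - 0)
         + Phi2 L f (zz L X l \<xi>) / 2 * (xp - 0)^2" ..
    have p0: "PP [] f (zz L X l 0) = 0" using XF X0 by simp
    have p1: "Phi1 L f (zz L X l 0) = 0" using zz0 Phi10 by simp
    have "Phi2 L f (zz L X l \<xi>) \<noteq> 0"
      by (rule Phi2_nz) (use \<xi>0 xp X0 True \<delta>0 in auto)
    moreover have "Phi2 L f (zz L X l \<xi>) / 2 * xp^2 = 0" using \<xi>0 z p0 p1 by simp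
    ultimately have "xp = 0" by simp
    then show ?thesis using X0 by simp
  qed
  show ?thesis
  proof (rule exI[of _ \<epsilon>], rule conjI[OF \<epsilon>0], rule exI[of _ \<delta>], rule conjI[OF \<delta>0],
         rule exI[of _ X], rule exI[of _ xminus], intro conjI allI impI)
    fix l assume l: "\<bar>l\<bar> < \<epsilon>"
    note XF = Xfacts[OF l]
    show "X l = X l" ..
    show "\<bar>X l\<bar> < \<delta>" using XF \<delta>0 by linarith
    show "\<bar>xminus l\<bar> < \<delta>" using xmin[OF l] by blast
    show "X l \<noteq> xminus l" if "l \<noteq> 0" using xmin[OF l] that by metis
    fix xp assume xp: "\<bar>xp\<bar> < \<delta>"
    show "f (\<chi> i. if i \<in> L then xp else X l) l = 0 \<longleftrightarrow> xp = X l \<or> xp = xminus l"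
    proof
      assume "f (\<chi> i. if i \<in> L then xp else X l) l = 0"
      then show "xp = X l \<or> xp = xminus l" using uniq[OF l xp] by (simp add: PP_zz)
    next
      assume "xp = X l \<or> xp = xminus l"
      then show "f (\<chi> i. if i \<in> L then xp else X l) l = 0"
        using XF xmin[OF l] by (auto simp: PP_zz)
    qed
  next
    show "(\<lambda>l. X l - D * l) \<in> O[nhds 0](\<lambda>l. l^2)"
    proof (rule landau_o.bigI[where c = "CX + 1"])
      show "CX + 1 > 0" using \<eta>1(3) by simp
      show "\<forall>\<^sub>F l in nhds 0. norm (X l - D * l) \<le> (CX + 1) * norm (l^2)"
        unfolding eventually_nhds_metric
      proof (intro exI[of _ \<epsilon>] conjI allI impI)
        show "\<epsilon> > 0" by (rule \<epsilon>0)
        fix l :: real assume "dist l 0 < \<epsilon>"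
        then have l: "\<bar>l\<bar> < \<epsilon>" by simp
        have "\<bar>X l - D * l\<bar> \<le> CX * l^2" using Xfacts[OF l] by blast
        also have "\<dots> \<le> (CX + 1) * l^2" by (simp add: mult_right_mono)
        finally show "norm (X l - D * l) \<le> (CX + 1) * norm (l^2)" by simp
      qed
    qed
  next
    show "(\<lambda>l. xminus l - (D - c / Q) * l) \<in> O[nhds 0](\<lambda>l. l^2)"
    proof (rule landau_o.bigI[where c = "Cm + 1"])
      show "Cm + 1 > 0" using Cm0 by simp
      show "\<forall>\<^sub>F l in nhds 0. norm (xminus l - (D - c / Q) * l) \<le> (Cm + 1) * norm (l^2)"
        unfolding eventually_nhds_metric
      proof (intro exI[of _ \<epsilon>] conjI allI impI)
        show "\<epsilon> > 0" by (rule \<epsilon>0)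
        fix l :: real assume "dist l 0 < \<epsilon>"
        then have l: "\<bar>l\<bar> < \<epsilon>" by simp
        have "\<bar>xminus l - (D - c / Q) * l\<bar> \<le> Cm * l^2" using xmin[OF l] by blast
        also have "\<dots> \<le> (Cm + 1) * l^2" by (simp add: mult_right_mono)
        finally show "norm (xminus l - (D - c / Q) * l) \<le> (Cm + 1) * norm (l^2)" by simp
      qed
    qed
  qed
qed


lemma deriv_lin0:
  fixes G H :: "real \<Rightarrow> real"
  assumes "G differentiable (at 0)" "H differentiable (at 0)"
  shows "deriv (\<lambda>t. G t + c * H t) 0 = deriv G 0 + c * deriv H 0"
    and "(\<lambda>t. G t + c * H t) differentiable (at 0)"
proof -
  have g: "(G has_real_derivative deriv G 0) (at 0)" using assms(1) by (simp add: DERIV_deriv_iff_real_differentiable)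
  have h: "(H has_real_derivative deriv H 0) (at 0)" using assms(2) by (simp add: DERIV_deriv_iff_real_differentiable)
  have d: "((\<lambda>t. G t + c * H t) has_real_derivative deriv G 0 + c * deriv H 0) (at 0)"
    by (rule derivative_eq_intros g h refl)+ simp
  then show "deriv (\<lambda>t. G t + c * H t) 0 = deriv G 0 + c * deriv H 0" by (rule DERIV_imp_deriv)
  show "(\<lambda>t. G t + c * H t) differentiable (at 0)" using d real_differentiable_def by blast
qed

lemma pd_lin:
  assumes "has_pd v g x l" "has_pd v h x l"
  shows "pd v (\<lambda>x l. g x l + c * h x l) x l = pd v g x l + c * pd v h x l"
    and "has_pd v (\<lambda>x l. g x l + c * h x l) x l"
  using assms deriv_lin0
  by (cases v; simp add: pd_def has_pd_def)+

lemma pds_lin: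
  assumes "smooth_fun g" "smooth_fun h"
  shows "pds vs (\<lambda>x l. g x l + c * h x l) = (\<lambda>x l. pds vs g x l + c * pds vs h x l)"
proof (induction vs)
  case Nil
  then show ?case by (simp add: pds_def)
next
  case (Cons v vs)
  have "pds (v # vs) (\<lambda>x l. g x l + c * h x l) = pd v (pds vs (\<lambda>x l. g x l + c * h x l))"
    by (simp add: pds_def)
  also have "\<dots> = pd v (\<lambda>x l. pds vs g x l + c * pds vs h x l)" by (simp only: Cons)
  also have "\<dots> = (\<lambda>x l. pd v (pds vs g) x l + c * pd v (pds vs h) x l)"
  proof (intro ext)
    fix x l
    show "pd v (\<lambda>x l. pds vs g x l + c * pds vs h x l) x l = pd v (pds vs g) x l + c * pd v (pds vs h) x l"
      by (rule pd_lin(1)) (use assms in \<open>auto simp: smooth_fun_def\<close>)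
  qed
  also have "\<dots> = (\<lambda>x l. pds (v # vs) g x l + c * pds (v # vs) h x l)" by (simp add: pds_def)
  finally show ?case .
qed

lemma smooth_lin:
  assumes "smooth_fun g" "smooth_fun h"
  shows "smooth_fun (\<lambda>x l. g x l + c * h x l)"
  unfolding smooth_fun_def
proof (intro allI conjI)
  fix vs
  have cg: "continuous_on UNIV (\<lambda>z. pds vs g (fst z) (snd z))"
    using assms(1) by (simp add: smooth_fun_def case_prod_beta')
  have ch: "continuous_on UNIV (\<lambda>z. pds vs h (fst z) (snd z))"
    using assms(2) by (simp add: smooth_fun_def case_prod_beta')
  have "continuous_on UNIV (\<lambda>z. pds vs g (fst z) (snd z) + c * pds vs h (fst z) (snd z))"
    by (intro continuous_intros cg ch)
  then show "continuous_on UNIV (\<lambda>(x, l). pds vs (\<lambda>x l. g x l + c * h x l) x l)"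
    by (simp add: pds_lin[OF assms] case_prod_beta')
  fix v x l
  show "has_pd v (pds vs (\<lambda>x l. g x l + c * h x l)) x l"
    unfolding pds_lin[OF assms]
    by (rule pd_lin(2)) (use assms in \<open>auto simp: smooth_fun_def\<close>)
qed

lemma taylor_lin:
  assumes "smooth_fun g" "smooth_fun h"
  shows "taylor (\<lambda>x l. g x l + c * h x l) = (\<lambda>vs. taylor g vs + c * taylor h vs)"
  by (simp add: taylor_def pds_lin[OF assms])


definition fam :: "'s::finite \<Rightarrow> real \<Rightarrow> real \<Rightarrow> real \<Rightarrow> real \<Rightarrow> real \<Rightarrow> (real^'s \<Rightarrow> real \<Rightarrow> real)" where
  "fam i0 a b c d e = (\<lambda>x l. a + b * x$i0 + c * (x$i0)^2 + d * l + e * x$i0 * l)"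

lemma fam_line_Some:
  "(\<lambda>t. fam i0 a b c d e (x + t *\<^sub>R axis i 1) l) =
     (\<lambda>t. fam i0 a b c d e x l + (if i = i0 then t * (b + 2 * c * x$i0 + e * l) + c * t^2 else 0))"
  by (auto simp: fam_def fun_eq_iff axis_def power2_eq_square algebra_simps)

lemma fam_line_None:
  "(\<lambda>t. fam i0 a b c d e x (l + t)) = (\<lambda>t. fam i0 a b c d e x l + t * (d + e * x$i0))"
  by (auto simp: fam_def fun_eq_iff algebra_simps)

lemma fam_deriv_Some:
  "((\<lambda>t. fam i0 a b c d e (x + t *\<^sub>R axis i 1) l) has_real_derivative
     (if i = i0 then b + 2 * c * x$i0 + e * l else 0)) (at 0)"
  unfolding fam_line_Some
  by (cases "i = i0") (auto intro!: derivative_eq_intros)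

lemma fam_deriv_None:
  "((\<lambda>t. fam i0 a b c d e x (l + t)) has_real_derivative (d + e * x$i0)) (at 0)"
  unfolding fam_line_None by (auto intro!: derivative_eq_intros)

lemma pd_fam_Some: "pd (Some i) (fam i0 a b c d e) = (if i = i0 then fam i0 b (2 * c) 0 e 0 else fam i0 0 0 0 0 0)"
  unfolding pd_def DERIV_imp_deriv[OF fam_deriv_Some] by (auto simp: fun_eq_iff fam_def)

lemma pd_fam_None: "pd None (fam i0 a b c d e) = fam i0 d e 0 0 0"
  unfolding pd_def option.case DERIV_imp_deriv[OF fam_deriv_None] by (auto simp: fun_eq_iff fam_def)

lemma has_pd_fam: "has_pd v (fam i0 a b c d e) x l"
  by (cases v) (auto simp: has_pd_def real_differentiable_def intro: fam_deriv_Some fam_deriv_None)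

lemma pds_fam: "\<exists>a' b' c' d' e'. pds vs (fam i0 a b c d e) = fam i0 a' b' c' d' e'"
proof (induction vs)
  case Nil
  show ?case unfolding pds_def foldr.simps id_def by (intro exI) (rule refl)
next
  case (Cons v vs)
  then obtain a' b' c' d' e' where eq: "pds vs (fam i0 a b c d e) = fam i0 a' b' c' d' e'" by blast
  show ?case
  proof (cases v)
    case None
    then show ?thesis using eq by (simp add: pds_def pd_fam_None) (intro exI, rule refl)
  next
    case (Some i)
    then show ?thesis using eq by (auto simp: pds_def pd_fam_Some) (intro exI, rule refl)+
  qed
qed

lemma cont_fam: "continuous_on UNIV (\<lambda>(x, l). fam i0 a b c d e x l)"
  unfolding fam_def case_prod_beta' by (intro continuous_intros)

lemma smooth_fam: "smooth_fun (fam i0 a b c d e)"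
  unfolding smooth_fun_def
proof (intro allI conjI)
  fix vs
  obtain a' b' c' d' e' where eq: "pds vs (fam i0 a b c d e) = fam i0 a' b' c' d' e'"
    using pds_fam by blast
  show "continuous_on UNIV (\<lambda>(x, l). pds vs (fam i0 a b c d e) x l)"
    unfolding eq by (rule cont_fam)
  fix v x l
  show "has_pd v (pds vs (fam i0 a b c d e)) x l" unfolding eq by (rule has_pd_fam)
qed


lemma below_arrow:
  assumes "sig i p \<noteq> p"
  shows "below sig p (sig i p)"
  unfolding below_def is_path_def
proof (intro exI[of _ "[sig i p, p]"] conjI)
  show "\<forall>j. Suc j < length [sig i p, p] \<longrightarrow> (\<exists>i'. sig i' ([sig i p, p] ! Suc j) = [sig i p, p] ! j)"
  proof (intro allI impI)
    fix j assume "Suc j < length [sig i p, p]"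
    then have "j = 0" by simp
    then show "\<exists>i'. sig i' ([sig i p, p] ! Suc j) = [sig i p, p] ! j" by auto
  qed
qed (use assms in auto)

lemma peq_eq: "peq sig f X p xp l = f (\<chi> i. if i \<in> Lset sig p then xp else X l) l"
proof -
  have "(\<chi> i. ((\<lambda>q. if below sig p q \<and> q \<noteq> p then X l else 0)(p := xp)) (sig i p))
      = (\<chi> i. if i \<in> Lset sig p then xp else X l)"
    by (auto simp: vec_eq_iff Lset_def below_arrow)
  then show ?thesis by (simp add: peq_def gamma_def)
qed

definition tQ :: "'s set \<Rightarrow> ('s option list \<Rightarrow> real) \<Rightarrow> real" where
  "tQ L t = (\<Sum>i\<in>L. \<Sum>j\<in>L. t [Some i, Some j] / 2)"
definition tS :: "'s set \<Rightarrow> ('s option list \<Rightarrow> real) \<Rightarrow> real" where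
  "tS L t = (\<Sum>i\<in>L. \<Sum>j\<in>-L. t [Some i, Some j] / 2)"
definition tF :: "'s set \<Rightarrow> ('s option list \<Rightarrow> real) \<Rightarrow> real" where
  "tF L t = (\<Sum>i\<in>L. t [Some i, None])"
definition tK :: "('s::finite option list \<Rightarrow> real) \<Rightarrow> real" where
  "tK t = (\<Sum>i\<in>UNIV. t [Some i])"
definition tlam :: "('s option list \<Rightarrow> real) \<Rightarrow> real" where
  "tlam t = t [None]"
definition tP :: "'s::finite set \<Rightarrow> ('s option list \<Rightarrow> real) \<Rightarrow> real" where
  "tP L t = -2 * tlam t * (tQ L t + tS L t) + tK t * tF L t"
definition GG :: "'s::finite set \<Rightarrow> ('s option list \<Rightarrow> real) set" where
  "GG L = {t. tQ L t \<noteq> 0 \<and> tK t \<noteq> 0 \<and> tP L t \<noteq> 0}"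

lemma cont_coord: "continuous_on UNIV (\<lambda>t :: 'a \<Rightarrow> real. t vs)"
  by (rule continuous_on_product_coordinates)

lemma open_GG: "open (GG L)"
proof -
  have cQ: "continuous_on UNIV (tQ L)" unfolding tQ_def by (intro continuous_intros cont_coord) auto
  have cK: "continuous_on UNIV tK" unfolding tK_def by (intro continuous_intros cont_coord)
  have cP: "continuous_on UNIV (tP L)"
    unfolding tP_def tQ_def tS_def tF_def tK_def tlam_def by (intro continuous_intros cont_coord) auto
  have "GG L = {t. tQ L t \<noteq> 0} \<inter> {t. tK t \<noteq> 0} \<inter> {t. tP L t \<noteq> 0}" by (auto simp: GG_def)
  moreover have "open {t. tQ L t \<noteq> 0}" by (rule open_Collect_neq[OF cQ continuous_on_const])
  moreover have "open {t. tK t \<noteq> (0::real)}" by (rule open_Collect_neq[OF cK continuous_on_const])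
  moreover have "open {t. tP L t \<noteq> 0}" by (rule open_Collect_neq[OF cP continuous_on_const])
  ultimately show ?thesis by auto
qed

lemma taylor_coefs:
  "tQ L (taylor f) = (\<Sum>i\<in>L. \<Sum>j\<in>L. coef_ff f i j)"
  "tS L (taylor f) = (\<Sum>i\<in>L. \<Sum>j\<in>-L. coef_ff f i j)"
  "tF L (taylor f) = (\<Sum>i\<in>L. coef_fl f i)"
  "tK (taylor f) = coef_K f"
  "tlam (taylor f) = coef_l f"
  by (simp_all add: tQ_def tS_def tF_def tK_def tlam_def taylor_def coef_ff_def coef_fl_def coef_K_def coef_a_def coef_l_def)

lemma transcritical_from_G:
  fixes sig :: "'s::finite \<Rightarrow> 'c \<Rightarrow> 'c"
  assumes sm: "smooth_fun f" and crit: "critical sig f p" and G: "taylor f \<in> GG (Lset sig p)"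
  shows "transcritical_conclusion sig f p"
  unfolding transcritical_conclusion_def
proof (intro allI impI)
  fix X :: "real \<Rightarrow> real"
  assume prem: "(\<exists>\<eta>>0. \<forall>l. \<bar>l\<bar> < \<eta> \<longrightarrow> f (\<chi> i. X l) l = 0) \<and>
      (\<lambda>l. X l - coef_D f * l - coef_R f * l^2) \<in> O[nhds 0](\<lambda>l. l^3)"
  define L where "L = Lset sig p"
  define Q where "Q = (\<Sum>i\<in>L. \<Sum>j\<in>L. coef_ff f i j)"
  define S where "S = (\<Sum>i\<in>L. \<Sum>j\<in>-L. coef_ff f i j)"
  define Sfl where "Sfl = (\<Sum>i\<in>L. coef_fl f i)"
  define c where "c = 2 * coef_D f * (Q + S) + Sfl"
  have Q0: "Q \<noteq> 0" and K0: "coef_K f \<noteq> 0" and P0: "-2 * coef_l f * (Q + S) + coef_K f * Sfl \<noteq> 0"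
    using G by (auto simp: GG_def tP_def taylor_coefs Q_def S_def Sfl_def L_def)
  have cK: "coef_K f * c = -2 * coef_l f * (Q + S) + coef_K f * Sfl"
    using K0 by (simp add: c_def coef_D_def field_simps)
  have c0: "c \<noteq> 0" using cK P0 by auto
  have crit': "(\<Sum>i\<in>L. coef_a f i) = 0" using crit by (simp add: critical_def L_def)
  obtain \<epsilon> \<delta> xplus xminus where main: "\<epsilon> > 0" "\<delta> > 0"
    "\<forall>l. \<bar>l\<bar> < \<epsilon> \<longrightarrow> xplus l = X l \<and> \<bar>xplus l\<bar> < \<delta> \<and> \<bar>xminus l\<bar> < \<delta> \<and> (l \<noteq> 0 \<longrightarrow> xplus l \<noteq> xminus l) \<and>
        (\<forall>xp. \<bar>xp\<bar> < \<delta> \<longrightarrow> (f (\<chi> i. if i \<in> L then xp else X l) l = 0 \<longleftrightarrow> xp = xplus l \<or> xp = xminus l))"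
    "(\<lambda>l. xplus l - coef_D f * l) \<in> O[nhds 0](\<lambda>l. l^2)"
    "(\<lambda>l. xminus l - (coef_D f - c / Q) * l) \<in> O[nhds 0](\<lambda>l. l^2)"
    using main_analytic[OF sm crit', of X, folded Q_def S_def Sfl_def, folded c_def, OF Q0 c0] prem
    by blast
  have Dp: "Dplus f = coef_D f" by (simp add: Dplus_def coef_D_def)
  have Dm: "Dminus sig f p = coef_D f - c / Q"
    using Q0 K0 by (simp add: Dminus_def Let_def L_def[symmetric] Q_def[symmetric] S_def[symmetric]
        Sfl_def[symmetric] c_def coef_D_def field_simps)
  show "\<exists>\<epsilon>>0. \<exists>\<delta>>0. \<exists>xplus xminus.
         (\<forall>l. \<bar>l\<bar> < \<epsilon> \<longrightarrow> xplus l = X l \<and> \<bar>xplus l\<bar> < \<delta> \<and> \<bar>xminus l\<bar> < \<delta> \<and> (l \<noteq> 0 \<longrightarrow> xplus l \<noteq> xminus l) \<and>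
            (\<forall>xp. \<bar>xp\<bar> < \<delta> \<longrightarrow> (peq sig f X p xp l = 0 \<longleftrightarrow> xp = xplus l \<or> xp = xminus l))) \<and>
         (\<lambda>l. xplus l - Dplus f * l) \<in> O[nhds 0](\<lambda>l. l^2) \<and>
         (\<lambda>l. xminus l - Dminus sig f p * l) \<in> O[nhds 0](\<lambda>l. l^2)"
  proof -
    have m: "xplus l = X l" "\<bar>xplus l\<bar> < \<delta>" "\<bar>xminus l\<bar> < \<delta>" "l \<noteq> 0 \<Longrightarrow> xplus l \<noteq> xminus l"
      "\<And>xp. \<bar>xp\<bar> < \<delta> \<Longrightarrow> (f (\<chi> i. if i \<in> L then xp else X l) l = 0 \<longleftrightarrow> xp = xplus l \<or> xp = xminus l)"
      if "\<bar>l\<bar> < \<epsilon>" for l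
      using main(3) that by blast+
    show ?thesis
      unfolding peq_eq Dp Dm L_def[symmetric]
      apply (rule exI[of _ \<epsilon>], rule conjI[OF main(1)], rule exI[of _ \<delta>], rule conjI[OF main(2)],
        rule exI[of _ xplus], rule exI[of _ xminus])
      using m main(4,5) by auto
  qed
qed


lemma fam_zero: "fam i0 a b c d e 0 0 = a"
  by (simp add: fam_def)

lemma taylor_fam:
  "taylor (fam i0 a b c d e) [Some i] = (if i = i0 then b else 0)"
  "taylor (fam i0 a b c d e) [None] = d"
  "taylor (fam i0 a b c d e) [Some i, Some j] = (if j = i0 then (if i = i0 then 2 * c else 0) else 0)"
  "taylor (fam i0 a b c d e) [Some i, None] = (if i = i0 then e else 0)"
  by (simp_all add: taylor_def pds_def pd_fam_Some pd_fam_None fam_zero)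

lemma critical_Lset: "Lset sig q = Lset sig r \<Longrightarrow> critical sig f q = critical sig f r"
  by (simp add: critical_def)

lemma assumption_B_iff: "assumption_B sig f \<longleftrightarrow> f 0 0 = 0 \<and> (\<exists>p. critical sig f p)"
  unfolding assumption_B_def using critical_Lset by metis

lemma maximal_Lset: "maximal_cell sig q \<Longrightarrow> Lset sig q = UNIV"
  by (auto simp: maximal_cell_def Lset_def)


lemma density:
  fixes sig :: "'s::finite \<Rightarrow> 'c \<Rightarrow> 'c" and f :: "real^'s \<Rightarrow> real \<Rightarrow> real"
  assumes i0: "i0 \<in> Lset sig p" and i1: "i1 \<notin> Lset sig p"
    and sm: "smooth_fun f" and fB: "f 0 0 = 0" and cp: "critical sig f p"
  shows "taylor f \<in> closure (GG (Lset sig p) \<inter> taylor ` {g. smooth_fun g \<and> assumption_B sig g \<and> critical sig g p \<and>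
            (\<forall>q. maximal_cell sig q \<longrightarrow> \<not> critical sig g q)})"
proof -
  define L where "L = Lset sig p"
  define P0 :: "real^'s \<Rightarrow> real \<Rightarrow> real" where "P0 = fam i1 0 1 0 0 0"
  define P1 :: "real^'s \<Rightarrow> real \<Rightarrow> real" where "P1 = fam i0 0 0 1 0 0"
  define P2 :: "real^'s \<Rightarrow> real \<Rightarrow> real" where "P2 = fam i0 0 0 0 0 1"
  have s0: "smooth_fun P0" "smooth_fun P1" "smooth_fun P2" by (simp_all add: P0_def P1_def P2_def smooth_fam)
  define g1 where "g1 z = (\<lambda>x l. f x l + fst z * P0 x l)" for z :: "real \<times> real \<times> real"
  define g2 where "g2 z = (\<lambda>x l. g1 z x l + fst (snd z) * P1 x l)" for z :: "real \<times> real \<times> real"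
  define gg where "gg z = (\<lambda>x l. g2 z x l + snd (snd z) * P2 x l)" for z :: "real \<times> real \<times> real"
  have sm1: "smooth_fun (g1 z)" for z unfolding g1_def by (rule smooth_lin[OF sm s0(1)])
  have sm2: "smooth_fun (g2 z)" for z unfolding g2_def by (rule smooth_lin[OF sm1 s0(2)])
  have smg: "smooth_fun (gg z)" for z unfolding gg_def by (rule smooth_lin[OF sm2 s0(3)])
  define tf where "tf = taylor f"
  define \<Phi> where "\<Phi> z = (\<lambda>vs. ((tf vs + fst z * taylor P0 vs) + fst (snd z) * taylor P1 vs) + snd (snd z) * taylor P2 vs)"
    for z :: "real \<times> real \<times> real"
  have tay: "taylor (gg z) = \<Phi> z" for z
  proof -
    have e3: "taylor (gg z) = (\<lambda>vs. taylor (g2 z) vs + snd (snd z) * taylor P2 vs)"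
      unfolding gg_def by (rule taylor_lin[OF sm2 s0(3)])
    have e2: "taylor (g2 z) = (\<lambda>vs. taylor (g1 z) vs + fst (snd z) * taylor P1 vs)"
      unfolding g2_def by (rule taylor_lin[OF sm1 s0(2)])
    have e1: "taylor (g1 z) = (\<lambda>vs. taylor f vs + fst z * taylor P0 vs)"
      unfolding g1_def by (rule taylor_lin[OF sm s0(1)])
    show ?thesis by (simp add: e1 e2 e3 \<Phi>_def tf_def)
  qed
  have cont: "continuous_on UNIV \<Phi>"
    unfolding \<Phi>_def by (intro continuous_on_coordinatewise_then_product continuous_intros)
  have gz0: "gg z 0 0 = 0" for z
    using fB by (simp add: gg_def g2_def g1_def P0_def P1_def P2_def fam_zero)
  have L0: "c * taylor P0 [Some i] = (if i = i1 then c else 0)" "taylor P0 [Some i, Some j] = 0"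
      "taylor P0 [Some i, None] = 0" "taylor P0 [None] = 0" for c i j
    by (simp_all add: P0_def taylor_fam)
  have L1: "taylor P1 [Some i] = 0" "c * taylor P1 [Some i, Some j] / 2 = (if j = i0 then (if i = i0 then c else 0) else 0)"
      "taylor P1 [Some i, None] = 0" "taylor P1 [None] = 0" for c i j
    by (simp_all add: P1_def taylor_fam)
  have L2: "taylor P2 [Some i] = 0" "taylor P2 [Some i, Some j] = 0"
      "c * taylor P2 [Some i, None] = (if i = i0 then c else 0)" "taylor P2 [None] = 0" for c i j
    by (simp_all add: P2_def taylor_fam)
  have vK: "tK (\<Phi> z) = tK tf + fst z" for z
    by (simp add: tK_def \<Phi>_def L0 L1 L2 sum.distrib)
  have vl: "tlam (\<Phi> z) = tlam tf" for z
    by (simp add: tlam_def \<Phi>_def L0 L1 L2)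
  have vQ: "tQ L (\<Phi> z) = tQ L tf + fst (snd z)" for z
    using i0 by (simp add: tQ_def \<Phi>_def L0 L1 L2 sum.distrib add_divide_distrib L_def)
  have vS: "tS L (\<Phi> z) = tS L tf" for z
    using i0 by (simp add: tS_def \<Phi>_def L0 L1 L2 sum.distrib add_divide_distrib L_def)
  have vF: "tF L (\<Phi> z) = tF L tf + snd (snd z)" for z
    using i0 by (simp add: tF_def \<Phi>_def L0 L1 L2 sum.distrib L_def)
  have va: "coef_a (gg z) i = coef_a f i + (if i = i1 then fst z else 0)" for z i
  proof -
    have ca: "coef_a g i = taylor g [Some i]" for g :: "real^'s \<Rightarrow> real \<Rightarrow> real" by (simp add: coef_a_def taylor_def)
    show ?thesis unfolding ca tay by (simp add: \<Phi>_def L0 L1 L2 tf_def)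
  qed
  show ?thesis
    unfolding closure_iff_nhds_not_empty
  proof (intro allI impI)
    fix B S assume SB: "S \<subseteq> B" and oS: "open S" and fS: "taylor f \<in> S"
    have oV: "open (\<Phi> -` S)" by (rule open_vimage[OF oS cont])
    have "\<Phi> 0 = taylor f" by (simp add: \<Phi>_def tf_def)
    then have "0 \<in> \<Phi> -` S" using fS by simp
    then obtain r where r: "r > 0" "ball 0 r \<subseteq> \<Phi> -` S" using oV open_contains_ball by blast
    define a0 where "a0 = (if tK tf + r/4 \<noteq> 0 then r/4 else r/8)"
    define a where "a = (if tQ L tf + r/4 \<noteq> 0 then r/4 else r/8)"
    define Pb where "Pb b = -2 * tlam tf * (tQ L tf + a + tS L tf) + (tK tf + a0) * (tF L tf + b)" for b
    define b where "b = (if Pb (r/4) \<noteq> 0 then r/4 else r/8)"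
    have Ka: "tK tf + a0 \<noteq> 0" using r(1) by (auto simp: a0_def)
    have Qa: "tQ L tf + a \<noteq> 0" using r(1) by (auto simp: a_def)
    have Pbne: "Pb b \<noteq> 0"
    proof (cases "Pb (r/4) = 0")
      case True
      have "Pb (r/8) = Pb (r/4) - (tK tf + a0) * (r/8)" by (simp add: Pb_def algebra_simps)
      then have "Pb (r/8) \<noteq> 0" using True Ka r(1) by simp
      then show ?thesis using True by (simp add: b_def)
    qed (simp add: b_def)
    have ab: "\<bar>a0\<bar> \<le> r/4" "\<bar>a\<bar> \<le> r/4" "\<bar>b\<bar> \<le> r/4" using r(1) by (auto simp: a0_def a_def b_def)
    define z where "z = (a0, a, b)"
    have "norm z \<le> \<bar>a0\<bar> + (\<bar>a\<bar> + \<bar>b\<bar>)"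
    proof -
      have "norm z \<le> norm a0 + norm (a, b)" unfolding z_def by (rule norm_Pair_le)
      also have "norm (a, b) \<le> norm a + norm b" by (rule norm_Pair_le)
      finally show ?thesis by simp
    qed
    then have "z \<in> ball 0 r" using ab r(1) by (simp add: dist_norm)
    then have zS: "\<Phi> z \<in> S" using r(2) by blast
    have inG: "\<Phi> z \<in> GG L"
      using Ka Qa Pbne by (simp add: GG_def tP_def vK vl vQ vS vF z_def Pb_def)
    have Ag: "smooth_fun (gg z) \<and> assumption_B sig (gg z) \<and> critical sig (gg z) p \<and>
            (\<forall>q. maximal_cell sig q \<longrightarrow> \<not> critical sig (gg z) q)"
    proof (intro conjI allI impI)
      show "smooth_fun (gg z)" by (rule smg)
      show cg: "critical sig (gg z) p"
        using cp i1 by (simp add: critical_def va sum.distrib)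
      show "assumption_B sig (gg z)" unfolding assumption_B_iff using gz0 cg by blast
      fix q assume "maximal_cell sig q"
      then have "Lset sig q = UNIV" by (rule maximal_Lset)
      moreover have "(\<Sum>i\<in>UNIV. coef_a (gg z) i) = tK tf + a0"
      proof -
        have "(\<Sum>i\<in>UNIV. coef_a (gg z) i) = (\<Sum>i\<in>UNIV. coef_a f i) + fst z" by (simp add: va sum.distrib)
        moreover have "tK tf = (\<Sum>i\<in>UNIV. coef_a f i)" by (simp add: tK_def tf_def taylor_def coef_a_def)
        ultimately show ?thesis by (simp add: z_def)
      qed
      ultimately show "\<not> critical sig (gg z) q" using Ka by (simp add: critical_def)
    qed
    have "\<Phi> z \<in> GG (Lset sig p) \<inter> taylor ` {g. smooth_fun g \<and> assumption_B sig g \<and> critical sig g p \<and>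
            (\<forall>q. maximal_cell sig q \<longrightarrow> \<not> critical sig g q)}"
      using inG Ag tay[of z] unfolding L_def by (auto intro!: image_eqI[where x = "gg z"])
    then show "GG (Lset sig p) \<inter> taylor ` {g. smooth_fun g \<and> assumption_B sig g \<and> critical sig g p \<and>
            (\<forall>q. maximal_cell sig q \<longrightarrow> \<not> critical sig g q)} \<inter> B \<noteq> {}"
      using zS SB by blast
  qed
qed


theorem lemma4p14:
  fixes sig :: "'s::finite \<Rightarrow> 'c::finite \<Rightarrow> 'c" and p :: 'c
  assumes "inj sig"
    and "\<exists>i. sig i = id"
    and "feedforward sig"
    and "\<not> maximal_cell sig p"
  shows "generically
           (\<lambda>f. smooth_fun f \<and> assumption_B sig f \<and> critical sig f p \<and>
                (\<forall>q. maximal_cell sig q \<longrightarrow> \<not> critical sig f q))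
           (\<lambda>f. transcritical_conclusion sig f p)"
proof -
  obtain i0 where "sig i0 = id" using assms(2) by blast
  then have i0: "i0 \<in> Lset sig p" by (simp add: Lset_def)
  obtain i1 where "sig i1 p \<noteq> p" using assms(4) by (auto simp: maximal_cell_def)
  then have i1: "i1 \<notin> Lset sig p" by (simp add: Lset_def)
  show ?thesis unfolding generically_def
  proof (rule exI[of _ "GG (Lset sig p)"], intro conjI allI impI)
    show "open (GG (Lset sig p))" by (rule open_GG)
  next
    fix f
    assume Af: "smooth_fun f \<and> assumption_B sig f \<and> critical sig f p \<and>
                (\<forall>q. maximal_cell sig q \<longrightarrow> \<not> critical sig f q)"
    show "taylor f \<in> closure (GG (Lset sig p) \<inter> taylor ` {g. smooth_fun g \<and> assumption_B sig g \<and> critical sig g p \<and>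
                (\<forall>q. maximal_cell sig q \<longrightarrow> \<not> critical sig g q)})"
    proof (rule density[OF i0 i1])
      show "smooth_fun f" using Af by blast
      show "critical sig f p" using Af by blast
      have "assumption_B sig f" using Af by blast
      then show "f 0 0 = 0" unfolding assumption_B_def by blast
    qed
  next
    fix f
    assume Af: "smooth_fun f \<and> assumption_B sig f \<and> critical sig f p \<and>
                (\<forall>q. maximal_cell sig q \<longrightarrow> \<not> critical sig f q)"
      and G: "taylor f \<in> GG (Lset sig p)"
    show "transcritical_conclusion sig f p"
    proof (rule transcritical_from_G[OF _ _ G])
      show "smooth_fun f" using Af by blast
      show "critical sig f p" using Af by blast
    qed
  qed
qed


end
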